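(* Let $d\in\mathbb{N}$ and let $C(d)$ be a constant such that for every Radon log-concave probability measure $\mu$ on a locally convex space $E$, every $f\in\mathcal{P}^d(\mu)$ and every $\varphi\in C_b^\infty(\mathbb{R})$ with $\|\varphi\|_\infty\le1$ one has $\sigma_f^{1/d}\int\varphi'(f)\,d\mu\le C(d)\|\varphi'\|_\infty^{1-1/d}$. Let $\mu$ be a Radon log-concave probability measure on a locally convex space $E$, let $f,g\in\mathcal{P}^d(\mu)$ be functions neither of which coincides a.e. with a constant, let $\rho_f,\rho_g$ be the densities of $\mu\circ f^{-1},\mu\circ g^{-1}$, and let $1<p<\frac{d}{d-1}$. Then $$\|\rho_f-\rho_g\|_{L^p(\mathbb{R})}\le C_1(d,p)\bigl(\sigma_f^{-1/d}+\sigma_g^{-1/d}\bigr)^{d(1-1/p)}\|\mu\circ f^{-1}-\mu\circ g^{-1}\|_{\rm TV}^{1-d(1-1/p)}$$ $$\le C_1(d,p)\bigl(\sigma_f^{-1/d}+\sigma_g^{-1/d}\bigr)^{d(1-1/p)}C_d(\sigma_f,\sigma_g)^{1-d(1-1/p)}\|\mu\circ f^{-1}-\mu\circ g^{-1}\|_{\rm FM}^{\frac{1}{1+d}(1-d(1-1/p))},$$ where $$C_1(d,p)=\Bigl(p(p-1)^{-1}+p\Bigl(\frac{d}{d-1}-p\Bigr)^{-1}\Bigr)^{1/p}C(d)^{d(1-1/p)},$$ $$C_d(\sigma_f,\sigma_g)=2+2C(d)\bigl(\sigma_f^{-1/d}+\sigma_g^{-1/d}\bigr)(2\pi)^{-1/2}\int_{\mathbb{R}}e^{-t^2/2}|t|^{1/d}dt.$$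 (For $d=1$, $\frac{d}{d-1}$ is interpreted as $+\infty$ and the term $p(\frac{d}{d-1}-p)^{-1}$ as $0$.)
   Context: Log-concave measures on $\mathbb{R}^n$: density $e^{-V}$ w.r.t. Lebesgue measure on an affine subspace, $V$ convex with values in $(-\infty,+\infty]$. A Radon probability measure on a locally convex space $E$ is log-concave if all its images under continuous linear maps to $\mathbb{R}^n$ are log-concave. $\mathcal{P}^d(\mu)$: closure in $L^2(\mu)$ of functions $p(\ell_1,\dots,\ell_n)$ with $\ell_i\in E^*$, $p$ a polynomial of degree $d$. $\sigma_f^2=\int(f-\int f\,d\mu)^2d\mu$. For probability measures $\nu_1,\nu_2$ on $\mathbb{R}$: $\|\nu_1-\nu_2\|_{\rm TV}=\sup\{\int\varphi\,d(\nu_1-\nu_2):\varphi\in C_b^\infty(\mathbb{R}),\|\varphi\|_\infty\le1\}$, $\|\nu_1-\nu_2\|_{\rm FM}=\sup\{\int\varphi\,d(\nu_1-\nu_2):\varphi\in C_b^\infty(\mathbb{R}),\|\varphi\|_\infty\le1,\|\varphi'\|_\infty\le1\}$; $C_b^\infty(\mathbb{R})$ is the space of bounded smooth functions with bounded derivatives of all orders. *)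

theory Defs
  imports "HOL-Analysis.Analysis" "HOL-Probability.Probability"
begin

definition lctvs :: "'e::{real_vector,t2_space} itself \<Rightarrow> bool" where
  "lctvs _ \<longleftrightarrow>
     continuous_on UNIV (\<lambda>z::'e \<times> 'e. fst z + snd z) \<and>
     continuous_on UNIV (\<lambda>z::real \<times> 'e. fst z *\<^sub>R snd z) \<and>
     (\<forall>U::'e set. open U \<and> 0 \<in> U \<longrightarrow> (\<exists>W. open W \<and> convex W \<and> 0 \<in> W \<and> W \<subseteq> U))"

definition dual_space :: "('e::{real_vector,t2_space} \<Rightarrow> real) set" where
  "dual_space = {l. linear l \<and> continuous_on UNIV l}"

definition radon :: "'e::t2_space measure \<Rightarrow> bool" where
  "radon M \<longleftrightarrow> sets M = sets borel \<and>
     (\<forall>B\<in>sets borel. emeasure M B = (SUP K\<in>{K. compact K \<and> K \<subseteq> B}. emeasure M K))"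

text \<open>R^n is represented as the functions on {..<n} (extensional), with Lebesgue measure
  PiM {..<n} (\<lambda>_. lborel). A measure on R^n is log-concave if it is the image under an
  injective affine map A : R^k \<rightarrow> R^n (parametrising an affine subspace) of a measure
  with density exp(-V) w.r.t. Lebesgue measure on R^k, V convex with values in (-\<infinity>,+\<infinity>].\<close>
definition lc_fin :: "nat \<Rightarrow> (nat \<Rightarrow> real) measure \<Rightarrow> bool" where
  "lc_fin n \<nu> \<longleftrightarrow>
    (\<exists>k\<le>n. \<exists>(b::nat \<Rightarrow> real) (a::nat \<Rightarrow> nat \<Rightarrow> real) (V::(nat \<Rightarrow> real) \<Rightarrow> ereal).
       (let A = (\<lambda>y. restrict (\<lambda>i. b i + (\<Sum>j<k. a i j * y j)) {..<n}) in
         inj_on A (PiE {..<k} (\<lambda>_. UNIV)) \<and>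
         (\<forall>y\<in>PiE {..<k} (\<lambda>_. UNIV). V y \<noteq> -\<infinity>) \<and>
         (\<forall>y\<in>PiE {..<k} (\<lambda>_. UNIV). \<forall>z\<in>PiE {..<k} (\<lambda>_. UNIV). \<forall>t::real. 0 \<le> t \<and> t \<le> 1 \<longrightarrow>
            V (restrict (\<lambda>j. t * y j + (1 - t) * z j) {..<k})
              \<le> ereal t * V y + ereal (1 - t) * V z) \<and>
         \<nu> = distr (density (PiM {..<k} (\<lambda>_. lborel))
                      (\<lambda>y. if V y = \<infinity> then 0 else ennreal (exp (- real_of_ereal (V y)))))
                   (PiM {..<n} (\<lambda>_. lborel)) A))"

definition log_concave :: "'e::{real_vector,t2_space} measure \<Rightarrow> bool" where
  "log_concave M \<longleftrightarrow> prob_space M \<and>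
     (\<forall>n (l::nat \<Rightarrow> 'e \<Rightarrow> real). (\<forall>i<n. l i \<in> dual_space) \<longrightarrow>
        lc_fin n (distr M (PiM {..<n} (\<lambda>_. lborel)) (\<lambda>x. restrict (\<lambda>i. l i x) {..<n})))"

definition poly_funs :: "nat \<Rightarrow> ('e::{real_vector,t2_space} \<Rightarrow> real) set" where
  "poly_funs d = {f. \<exists>(J::nat set) (c::nat \<Rightarrow> real) (m::nat \<Rightarrow> nat) (l::nat \<Rightarrow> nat \<Rightarrow> 'e \<Rightarrow> real).
      finite J \<and> (\<forall>j\<in>J. m j \<le> d \<and> (\<forall>i<m j. l j i \<in> dual_space)) \<and>
      f = (\<lambda>x. \<Sum>j\<in>J. c j * (\<Prod>i<m j. l j i x))}"

definition Pd :: "'e::{real_vector,t2_space} measure \<Rightarrow> nat \<Rightarrow> ('e \<Rightarrow> real) set" where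
  "Pd M d = {f \<in> borel_measurable M. integrable M (\<lambda>x. (f x)\<^sup>2) \<and>
      (\<exists>p::nat \<Rightarrow> 'e \<Rightarrow> real. (\<forall>k. p k \<in> poly_funs d \<and> integrable M (\<lambda>x. (f x - p k x)\<^sup>2)) \<and>
         (\<lambda>k. \<integral>x. (f x - p k x)\<^sup>2 \<partial>M) \<longlonglongrightarrow> 0)}"

definition sigma_f :: "'e measure \<Rightarrow> ('e \<Rightarrow> real) \<Rightarrow> real" where
  "sigma_f M f = sqrt (\<integral>x. (f x - (\<integral>y. f y \<partial>M))\<^sup>2 \<partial>M)"

definition Cb_inf :: "(real \<Rightarrow> real) \<Rightarrow> bool" where
  "Cb_inf \<phi> \<longleftrightarrow> (\<forall>k. (\<forall>x. ((deriv ^^ k) \<phi>) differentiable (at x)) \<and> bounded (range ((deriv ^^ k) \<phi>)))"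

definition supnorm :: "(real \<Rightarrow> real) \<Rightarrow> real" where
  "supnorm \<phi> = (SUP x. \<bar>\<phi> x\<bar>)"

definition TV_dist :: "real measure \<Rightarrow> real measure \<Rightarrow> real" where
  "TV_dist \<nu>1 \<nu>2 = Sup {(\<integral>x. \<phi> x \<partial>\<nu>1) - (\<integral>x. \<phi> x \<partial>\<nu>2) | \<phi>. Cb_inf \<phi> \<and> (\<forall>x. \<bar>\<phi> x\<bar> \<le> 1)}"

definition FM_dist :: "real measure \<Rightarrow> real measure \<Rightarrow> real" where
  "FM_dist \<nu>1 \<nu>2 = Sup {(\<integral>x. \<phi> x \<partial>\<nu>1) - (\<integral>x. \<phi> x \<partial>\<nu>2) | \<phi>.
      Cb_inf \<phi> \<and> (\<forall>x. \<bar>\<phi> x\<bar> \<le> 1) \<and> (\<forall>x. \<bar>deriv \<phi> x\<bar> \<le> 1)}"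

end

theory Submission
  imports Defs
begin

definition smk :: "nat \<Rightarrow> (real \<Rightarrow> real) \<Rightarrow> bool" where
  "smk k \<phi> \<longleftrightarrow> (\<forall>j\<le>k. (\<forall>x. ((deriv ^^ j) \<phi>) differentiable (at x)) \<and> bounded (range ((deriv ^^ j) \<phi>)))"

lemma Cb_inf_smk: "Cb_inf \<phi> \<longleftrightarrow> (\<forall>k. smk k \<phi>)"
  unfolding Cb_inf_def smk_def by blast

lemma smk_0: "smk 0 \<phi> \<longleftrightarrow> (\<forall>x. \<phi> differentiable (at x)) \<and> bounded (range \<phi>)"
  unfolding smk_def by auto

lemma smk_Suc: "smk (Suc k) \<phi> \<longleftrightarrow> (\<forall>x. \<phi> differentiable (at x)) \<and> bounded (range \<phi>) \<and> smk k (deriv \<phi>)"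
proof -
  have "(\<forall>j\<le>Suc k. P j) \<longleftrightarrow> P 0 \<and> (\<forall>j\<le>k. P (Suc j))" for P
    apply auto
    subgoal for j by (cases j) auto
    done
  then show ?thesis unfolding smk_def by (simp only: funpow_Suc_right o_def funpow_0 conj_assoc)
qed

lemma smk_mono: "smk (Suc k) \<phi> \<Longrightarrow> smk k \<phi>"
  unfolding smk_def by auto

lemma smk_diff: "smk k \<phi> \<Longrightarrow> \<phi> differentiable (at x)"
  unfolding smk_def by (metis funpow_0 le0)

lemma smk_bounded: "smk k \<phi> \<Longrightarrow> bounded (range \<phi>)"
  unfolding smk_def by (metis funpow_0 le0)

lemma deriv_eqI: "(\<And>x. (f has_real_derivative f' x) (at x)) \<Longrightarrow> deriv f = f'"
  by (rule ext) (rule DERIV_imp_deriv)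

lemma smk_SucI:
  assumes "\<And>x. (f has_real_derivative f' x) (at x)" "bounded (range f)" "smk k f'"
  shows "smk (Suc k) f"
proof -
  have "deriv f = f'" using assms(1) by (rule deriv_eqI)
  then show ?thesis using assms by (auto simp: smk_Suc real_differentiable_def)
qed

lemma has_deriv_smk: "smk k \<phi> \<Longrightarrow> (\<phi> has_real_derivative deriv \<phi> x) (at x)"
  using smk_diff DERIV_deriv_iff_real_differentiable by blast

lemma bounded_range_iff: "bounded (range (f::'a\<Rightarrow>real)) \<longleftrightarrow> (\<exists>B. \<forall>x. \<bar>f x\<bar> \<le> B)"
  unfolding bounded_iff by auto

lemma bdd_add: "bounded (range (f::'a\<Rightarrow>real)) \<Longrightarrow> bounded (range g) \<Longrightarrow> bounded (range (\<lambda>x. f x + g x))"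
  unfolding bounded_range_iff by (meson abs_triangle_ineq add_mono order_trans)

lemma bdd_mult: "bounded (range (f::'a\<Rightarrow>real)) \<Longrightarrow> bounded (range g) \<Longrightarrow> bounded (range (\<lambda>x. f x * g x))"
  unfolding bounded_range_iff abs_mult by (meson abs_ge_zero mult_mono order_trans)

lemma bdd_const: "bounded (range (\<lambda>x::'a. c::real))"
  unfolding bounded_range_iff by auto

lemma smk_const: "smk k (\<lambda>x. c)"
proof (induction k arbitrary: c)
  case 0 then show ?case by (simp add: smk_0)
next
  case (Suc k) show ?case
    by (rule smk_SucI[where f'="\<lambda>x. 0"]) (auto intro!: derivative_eq_intros Suc)
qed

lemma smk_add: "smk k f \<Longrightarrow> smk k g \<Longrightarrow> smk k (\<lambda>x. f x + g x)"
proof (induction k arbitrary: f g)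
  case 0 then show ?case unfolding smk_0 using bdd_add by auto
next
  case (Suc k)
  show ?case
  proof (rule smk_SucI[where f'="\<lambda>x. deriv f x + deriv g x"])
    show "((\<lambda>x. f x + g x) has_real_derivative deriv f x + deriv g x) (at x)" for x
      using Suc.prems by (auto intro!: derivative_eq_intros has_deriv_smk)
    show "bounded (range (\<lambda>x. f x + g x))"
      using Suc.prems smk_bounded bdd_add by blast
    show "smk k (\<lambda>x. deriv f x + deriv g x)"
      using Suc by (simp add: smk_Suc)
  qed
qed

lemma smk_cmult: "smk k f \<Longrightarrow> smk k (\<lambda>x. c * f x)"
proof (induction k arbitrary: f)
  case 0 then show ?case
    unfolding smk_0 using bdd_mult[OF bdd_const] by auto
next
  case (Suc k)
  show ?case
  proof (rule smk_SucI[where f'="\<lambda>x. c * deriv f x"])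
    show "((\<lambda>x. c * f x) has_real_derivative c * deriv f x) (at x)" for x
      using Suc.prems by (auto intro!: derivative_eq_intros has_deriv_smk)
    show "bounded (range (\<lambda>x. c * f x))"
      using Suc.prems smk_bounded bdd_mult[OF bdd_const] by blast
    show "smk k (\<lambda>x. c * deriv f x)"
      using Suc by (simp add: smk_Suc)
  qed
qed

lemma smk_mult: "smk k f \<Longrightarrow> smk k g \<Longrightarrow> smk k (\<lambda>x. f x * g x)"
proof (induction k arbitrary: f g)
  case 0 then show ?case unfolding smk_0 using bdd_mult by auto
next
  case (Suc k)
  show ?case
  proof (rule smk_SucI[where f'="\<lambda>x. deriv f x * g x + f x * deriv g x"])
    show "((\<lambda>x. f x * g x) has_real_derivative deriv f x * g x + f x * deriv g x) (at x)" for x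
      using Suc.prems by (auto intro!: derivative_eq_intros has_deriv_smk)
    show "bounded (range (\<lambda>x. f x * g x))"
      using Suc.prems smk_bounded bdd_mult by blast
    show "smk k (\<lambda>x. deriv f x * g x + f x * deriv g x)"
      using Suc smk_mono by (intro smk_add) (auto simp: smk_Suc)
  qed
qed

lemma affine_deriv: "((\<lambda>x::real. a * x + b) has_real_derivative a) (at x)"
  using DERIV_add[OF DERIV_cmult[OF DERIV_ident, of a] DERIV_const[of b]] by simp

lemma bdd_affine: "bounded (range (f::real\<Rightarrow>real)) \<Longrightarrow> bounded (range (\<lambda>x. f (a * x + b)))"
  unfolding bounded_range_iff by blast

lemma smk_affine: "smk k f \<Longrightarrow> smk k (\<lambda>x. f (a * x + b))"
proof (induction k arbitrary: f)
  case 0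
  have "(\<lambda>x. f (a * x + b)) differentiable at x" for x
    using DERIV_chain2[OF has_deriv_smk[OF 0, of "a*x+b"] affine_deriv[of a b x]]
    by (auto simp: real_differentiable_def)
  then show ?case using smk_bounded[OF 0] bdd_affine by (simp add: smk_0)
next
  case (Suc k)
  show ?case
  proof (rule smk_SucI[where f'="\<lambda>x. a * deriv f (a * x + b)"])
    show "((\<lambda>x. f (a * x + b)) has_real_derivative a * deriv f (a * x + b)) (at x)" for x
      using DERIV_chain2[OF has_deriv_smk[OF Suc.prems, of "a*x+b"] affine_deriv[of a b x]]
      by (simp add: mult.commute)
    show "bounded (range (\<lambda>x. f (a * x + b)))"
      using smk_bounded[OF Suc.prems] bdd_affine by blast
    have "smk k (deriv f)" using Suc.prems by (simp add: smk_Suc)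
    then show "smk k (\<lambda>x. a * deriv f (a * x + b))"
      using Suc.IH by (intro smk_cmult)
  qed
qed

lemma cosh_real_ne0: "cosh (x::real) \<noteq> 0"
  using cosh_real_pos[of x] by simp

lemma tanh_deriv: "(tanh has_real_derivative 1 - tanh x * tanh x) (at (x::real))"
  using has_field_derivative_tanh[where g="\<lambda>x. x" and Db=1 and x=x and s=UNIV] cosh_real_ne0[of x]
  by (simp add: power2_eq_square)

lemma smk_tanh: "smk k tanh"
proof (induction k)
  case 0
  have "tanh differentiable at (x::real)" for x
    using tanh_deriv real_differentiable_def by blast
  moreover have "bounded (range (tanh::real\<Rightarrow>real))"
    unfolding bounded_range_iff
    by (intro exI[of _ 1] allI) (use tanh_real_lt_1 tanh_real_gt_neg1 in \<open>auto simp: abs_le_iff less_imp_le\<close>)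
  ultimately show ?case by (simp add: smk_0)
next
  case (Suc k)
  show ?case
  proof (rule smk_SucI[where f'="\<lambda>x. 1 - tanh x * tanh x"])
    show "(tanh has_real_derivative 1 - tanh x * tanh x) (at x)" for x :: real
      by (rule tanh_deriv)
    show "bounded (range (tanh::real\<Rightarrow>real))"
      using Suc smk_bounded by blast
    show "smk k (\<lambda>x. 1 - tanh x * tanh x)"
      using smk_add[OF smk_const smk_cmult[OF smk_mult[OF Suc Suc], of "-1"], of 1] by simp
  qed
qed

lemma smk_sin_cos: "smk k sin \<and> smk k cos"
proof (induction k)
  case 0
  have "bounded (range (sin::real\<Rightarrow>real))" "bounded (range (cos::real\<Rightarrow>real))"
    unfolding bounded_range_iff by (meson abs_sin_le_one abs_cos_le_one)+
  then show ?case by (simp add: smk_0 real_differentiable_def, blast intro: DERIV_sin DERIV_cos)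
next
  case (Suc k)
  have "smk (Suc k) sin"
    by (rule smk_SucI[where f'=cos]) (use Suc smk_bounded in \<open>auto intro: DERIV_sin\<close>)
  moreover have "smk (Suc k) cos"
    using smk_SucI[where f'="\<lambda>x. -1 * sin x" and f=cos and k=k] Suc smk_bounded smk_cmult[of k sin "-1"]
    by (auto intro: DERIV_cos)
  ultimately show ?case by blast
qed

lemma smk_sum: "finite J \<Longrightarrow> (\<And>j. j \<in> J \<Longrightarrow> smk k (f j)) \<Longrightarrow> smk k (\<lambda>x. \<Sum>j\<in>J. f j x)"
proof (induction J rule: finite_induct)
  case empty then show ?case using smk_const[of k 0] by simp
next
  case (insert a F) then show ?case by (simp add: smk_add)
qed

definition pc :: "real \<Rightarrow> real \<Rightarrow> int \<Rightarrow> real \<Rightarrow> real" where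
  "pc w \<delta> j x = (tanh ((x - j*w)/\<delta>) - tanh ((x - (j+1)*w)/\<delta>))/2"
definition psiJ :: "int set \<Rightarrow> real \<Rightarrow> real \<Rightarrow> real \<Rightarrow> real" where
  "psiJ J w \<delta> x = (\<Sum>j\<in>J. pc w \<delta> j x)"
definition LC :: "real \<Rightarrow> real" where "LC u = ln (cosh u)"
definition qc :: "real \<Rightarrow> real \<Rightarrow> int \<Rightarrow> real \<Rightarrow> real" where
  "qc w \<delta> j x = \<delta> * (LC ((x - j*w)/\<delta>) - LC ((x - (j+1)*w)/\<delta>)) / 2"
definition PhiJ :: "int set \<Rightarrow> real \<Rightarrow> real \<Rightarrow> real \<Rightarrow> real" where
  "PhiJ J w \<delta> x = (\<Sum>j\<in>J. qc w \<delta> j x)"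

lemma LC_deriv: "(LC has_real_derivative tanh u) (at u)"
  unfolding LC_def tanh_def
  by (auto intro!: derivative_eq_intros simp: cosh_real_ne0 cosh_real_pos)

lemma abs_tanh_le1: "\<bar>tanh (x::real)\<bar> \<le> 1"
  using tanh_real_lt_1[of x] tanh_real_gt_neg1[of x] by (simp add: abs_le_iff less_imp_le)

lemma LC_lipschitz: "\<bar>LC u - LC v\<bar> \<le> \<bar>u - v\<bar>"
proof -
  have main: "\<bar>LC b - LC a\<bar> \<le> \<bar>b - a\<bar>" if "a < b" for a b
  proof -
    have "\<exists>z>a. z < b \<and> LC b - LC a = (b - a) * tanh z"
      by (rule MVT2[OF that]) (rule LC_deriv)
    then obtain z where "LC b - LC a = (b - a) * tanh z" by blast
    then have "\<bar>LC b - LC a\<bar> = \<bar>b - a\<bar> * \<bar>tanh z\<bar>" by (simp add: abs_mult)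
    also have "\<dots> \<le> \<bar>b - a\<bar>" using abs_tanh_le1[of z] by (simp add: mult_left_le)
    finally show ?thesis .
  qed
  show ?thesis
    by (cases u v rule: linorder_cases) (use main[of u v] main[of v u] in \<open>auto simp: abs_minus_commute\<close>)
qed

lemma pc_deriv_form: "pc w \<delta> j = (\<lambda>x. 1/2 * tanh ((1/\<delta>) * x + (- (j*w)/\<delta>)) + (-1/2) * tanh ((1/\<delta>) * x + (- ((j+1)*w)/\<delta>)))"
  by (rule ext) (simp add: pc_def diff_divide_distrib)

lemma smk_pc: "smk k (pc w \<delta> j)"
  unfolding pc_deriv_form
  by (intro smk_add smk_cmult smk_affine smk_tanh)

lemma smk_psiJ: "finite J \<Longrightarrow> smk k (psiJ J w \<delta>)"
  unfolding psiJ_def[abs_def] by (intro smk_sum smk_pc)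

lemma qc_deriv: "\<delta> \<noteq> 0 \<Longrightarrow> (qc w \<delta> j has_real_derivative pc w \<delta> j x) (at x)"
proof -
  assume d: "\<delta> \<noteq> 0"
  have 1: "((\<lambda>x. LC ((x - c)/\<delta>)) has_real_derivative tanh ((x - c)/\<delta>) * (1/\<delta>)) (at x)" for c
    by (rule DERIV_chain2[OF LC_deriv]) (use d in \<open>auto intro!: derivative_eq_intros\<close>)
  have e: "qc w \<delta> j = (\<lambda>x. \<delta>/2 * (LC ((x - j*w)/\<delta>) - LC ((x - (j+1)*w)/\<delta>)))"
    by (rule ext) (simp add: qc_def)
  show ?thesis
    unfolding e
    by (rule DERIV_cong[OF DERIV_cmult[OF DERIV_diff[OF 1[of "j*w"] 1[of "(j+1)*w"]], of "\<delta>/2"]])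
      (use d in \<open>simp add: pc_def field_simps\<close>)
qed

lemma PhiJ_deriv: "\<delta> \<noteq> 0 \<Longrightarrow> (PhiJ J w \<delta> has_real_derivative psiJ J w \<delta> x) (at x)"
  unfolding PhiJ_def[abs_def] psiJ_def
  by (rule DERIV_sum) (rule qc_deriv)

lemma qc_bound: "\<delta> > 0 \<Longrightarrow> w \<ge> 0 \<Longrightarrow> \<bar>qc w \<delta> j x\<bar> \<le> w / 2"
proof -
  assume d: "\<delta> > 0" and w: "w \<ge> 0"
  have "\<bar>LC ((x - j*w)/\<delta>) - LC ((x - (j+1)*w)/\<delta>)\<bar> \<le> \<bar>(x - j*w)/\<delta> - (x - (j+1)*w)/\<delta>\<bar>"
    by (rule LC_lipschitz)
  also have "\<dots> = w / \<delta>" using d w by (simp add: field_simps)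
  finally have "\<delta> * \<bar>LC ((x - j*w)/\<delta>) - LC ((x - (j+1)*w)/\<delta>)\<bar> \<le> w"
    using d by (simp add: pos_le_divide_eq mult.commute)
  then show ?thesis using d unfolding qc_def by (simp add: abs_mult)
qed

lemma PhiJ_bound: "\<delta> > 0 \<Longrightarrow> w \<ge> 0 \<Longrightarrow> \<bar>PhiJ J w \<delta> x\<bar> \<le> real (card J) * w / 2"
proof -
  assume d: "\<delta> > 0" and w: "w \<ge> 0"
  have "\<bar>PhiJ J w \<delta> x\<bar> \<le> (\<Sum>j\<in>J. \<bar>qc w \<delta> j x\<bar>)" unfolding PhiJ_def by (rule sum_abs)
  also have "\<dots> \<le> (\<Sum>j\<in>J. w / 2)" by (intro sum_mono qc_bound d w)
  also have "\<dots> = real (card J) * w / 2" by simp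
  finally show ?thesis .
qed

lemma Cb_inf_PhiJ: "finite J \<Longrightarrow> \<delta> > 0 \<Longrightarrow> w \<ge> 0 \<Longrightarrow> Cb_inf (PhiJ J w \<delta>)"
  unfolding Cb_inf_smk
proof
  fix k assume J: "finite J" and d: "\<delta> > 0" and w: "w \<ge> 0"
  have "smk (Suc k) (PhiJ J w \<delta>)"
  proof (rule smk_SucI[OF PhiJ_deriv])
    show "bounded (range (PhiJ J w \<delta>))"
      unfolding bounded_range_iff using PhiJ_bound[OF d w] by blast
  qed (use d smk_psiJ[OF J] in auto)
  then show "smk k (PhiJ J w \<delta>)" by (rule smk_mono)
qed

lemma deriv_PhiJ: "\<delta> \<noteq> 0 \<Longrightarrow> deriv (PhiJ J w \<delta>) = psiJ J w \<delta>"
  by (rule deriv_eqI) (rule PhiJ_deriv)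

lemma pc_nonneg: "\<delta> > 0 \<Longrightarrow> w \<ge> 0 \<Longrightarrow> pc w \<delta> j x \<ge> 0"
proof -
  assume d: "\<delta> > 0" and w: "w \<ge> 0"
  have "x - (j+1)*w \<le> x - j*w" using w by (simp add: algebra_simps)
  then have "(x - (j+1)*w)/\<delta> \<le> (x - j*w)/\<delta>" using d by (rule divide_right_mono[OF _ less_imp_le])
  then show ?thesis unfolding pc_def by simp
qed

lemma pc_telescope:
  fixes lo :: int and w \<delta> x :: real
  shows "(\<Sum>i<n. pc w \<delta> (lo + int i) x) = (tanh ((x - real_of_int lo*w)/\<delta>) - tanh ((x - real_of_int (lo + int n)*w)/\<delta>))/2"
proof (induction n)
  case 0 then show ?case by simp
next
  case (Suc n)
  have e: "real_of_int (lo + int n) + 1 = real_of_int (lo + int (Suc n))" by simp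
  show ?case using Suc unfolding sum.lessThan_Suc pc_def e by (simp add: diff_divide_distrib)
qed

lemma psiJ_nonneg: "\<delta> > 0 \<Longrightarrow> w \<ge> 0 \<Longrightarrow> psiJ J w \<delta> x \<ge> 0"
  unfolding psiJ_def by (intro sum_nonneg pc_nonneg)

lemma psiJ_le1:
  assumes J: "finite J" and d: "\<delta> > 0" and w: "w \<ge> 0"
  shows "psiJ J w \<delta> x \<le> 1"
proof -
  define N where "N = nat (Max (insert 0 (abs ` J))) + 1"
  have N: "J \<subseteq> {-int N..<int N}"
  proof
    fix j assume "j \<in> J"
    then have "\<bar>j\<bar> \<le> Max (insert 0 (abs ` J))" using J by (intro Max_ge) auto
    then show "j \<in> {-int N..<int N}" unfolding N_def by auto
  qed
  let ?I = "(\<lambda>i. - int N + int i) ` {..<2*N}"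
  have I: "{-int N..<int N} = ?I"
  proof
    show "{-int N..<int N} \<subseteq> ?I"
    proof
      fix j assume "j \<in> {-int N..<int N}"
      then have "j = - int N + int (nat (j + int N))" "nat (j + int N) < 2*N" by auto
      then show "j \<in> ?I" by blast
    qed
  qed auto
  have "psiJ J w \<delta> x \<le> (\<Sum>j\<in>{-int N..<int N}. pc w \<delta> j x)"
    unfolding psiJ_def by (rule sum_mono2) (use N pc_nonneg d w in auto)
  also have "\<dots> = (\<Sum>i<2*N. pc w \<delta> (- int N + int i) x)"
    unfolding I by (subst sum.reindex) (auto simp: inj_on_def)
  also have "\<dots> = (tanh ((x - (- int N)*w)/\<delta>) - tanh ((x - (- int N + int (2*N))*w)/\<delta>))/2"
    using pc_telescope[where lo="- int N" and n="2*N" and w=w and \<delta>=\<delta> and x=x] by simp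
  also have "\<dots> \<le> 1"
    using abs_tanh_le1[of "(x - (- int N)*w)/\<delta>"] abs_tanh_le1[of "(x - (- int N + int (2*N))*w)/\<delta>"]
    by (simp add: abs_le_iff)
  finally show ?thesis .
qed

lemma supnorm_le: "(\<And>x. \<bar>g x\<bar> \<le> D) \<Longrightarrow> supnorm g \<le> D"
  unfolding supnorm_def by (rule cSUP_least) auto

lemma supnorm_nonneg: "bounded (range g) \<Longrightarrow> 0 \<le> supnorm g"
proof -
  assume b: "bounded (range g)"
  then obtain B where B: "\<And>x. \<bar>g x\<bar> \<le> B" unfolding bounded_range_iff by blast
  have "\<bar>g 0\<bar> \<le> supnorm g"
    unfolding supnorm_def by (rule cSUP_upper) (use B in \<open>auto intro!: bdd_aboveI2\<close>)
  then show ?thesis by linarith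
qed

definition SBd :: "(real \<Rightarrow> real) \<Rightarrow> real \<Rightarrow> nat \<Rightarrow> bool" where
  "SBd \<rho> K d \<longleftrightarrow> (\<forall>\<theta>. Cb_inf \<theta> \<and> (\<forall>x. \<bar>\<theta> x\<bar> \<le> 1) \<longrightarrow>
      (\<integral>t. \<rho> t * deriv \<theta> t \<partial>lborel) \<le> K * supnorm (deriv \<theta>) powr (1 - 1/real d))"

lemma Cb_inf_cmult: "Cb_inf f \<Longrightarrow> Cb_inf (\<lambda>x. c * f x)"
  unfolding Cb_inf_smk by (auto intro: smk_cmult)

lemma Cb_inf_deriv: "Cb_inf f \<Longrightarrow> (f has_real_derivative deriv f x) (at x)"
  unfolding Cb_inf_smk by (auto intro: has_deriv_smk)

lemma Cb_inf_deriv_bounded: "Cb_inf f \<Longrightarrow> bounded (range (deriv f))"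
  unfolding Cb_inf_smk by (metis smk_Suc smk_bounded)

lemma SBd_scaled:
  assumes SB: "SBd \<rho> K d" and K: "K \<ge> 0" and d: "d \<ge> 1"
    and th: "Cb_inf \<theta>" and L: "L > 0" "\<And>x. \<bar>\<theta> x\<bar> \<le> L" and D: "\<And>x. \<bar>deriv \<theta> x\<bar> \<le> D"
  shows "(\<integral>t. \<rho> t * deriv \<theta> t \<partial>lborel) \<le> K * L * (D / L) powr (1 - 1/real d)"
proof -
  define \<eta> where "\<eta> = (\<lambda>x. (1/L) * \<theta> x)"
  have Ce: "Cb_inf \<eta>" unfolding \<eta>_def by (rule Cb_inf_cmult[OF th])
  have de: "deriv \<eta> = (\<lambda>x. (1/L) * deriv \<theta> x)"
    unfolding \<eta>_def by (rule deriv_eqI) (rule DERIV_cmult[OF Cb_inf_deriv[OF th]])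
  have b1: "\<forall>x. \<bar>\<eta> x\<bar> \<le> 1" using L unfolding \<eta>_def by (auto simp: abs_mult divide_le_eq_1)
  have "(\<integral>t. \<rho> t * deriv \<eta> t \<partial>lborel) \<le> K * supnorm (deriv \<eta>) powr (1 - 1/real d)"
    using SB Ce b1 unfolding SBd_def by blast
  also have "\<dots> \<le> K * (D / L) powr (1 - 1/real d)"
  proof (intro mult_left_mono K powr_mono2)
    show "0 \<le> 1 - 1/real d" using d by simp
    show "0 \<le> supnorm (deriv \<eta>)" by (rule supnorm_nonneg) (use Cb_inf_deriv_bounded[OF Ce] in auto)
    show "supnorm (deriv \<eta>) \<le> D / L"
      unfolding de using D L by (intro supnorm_le) (auto simp: abs_mult divide_right_mono)
  qed
  finally have "(\<integral>t. \<rho> t * deriv \<theta> t \<partial>lborel) / L \<le> K * (D / L) powr (1 - 1/real d)"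
    unfolding de by (simp add: mult.left_commute)
  then show ?thesis using L by (simp add: divide_le_eq mult.commute mult.left_commute)
qed

definition GU :: "int set \<Rightarrow> real \<Rightarrow> real set" where
  "GU J w = (\<Union>j\<in>J. {real_of_int j*w <..< real_of_int (j+1)*w})"

lemma SBd_grid_smooth:
  assumes SB: "SBd \<rho> K d" and K: "K \<ge> 0" and d: "d \<ge> 1" and J: "finite J" and w: "w > 0" and dl: "\<delta> > 0"
  shows "(\<integral>t. \<rho> t * psiJ J w \<delta> t \<partial>lborel) \<le> K * (real (card J) * w / 2) powr (1/real d)"
proof (cases "J = {}")
  case True then show ?thesis using K by (simp add: psiJ_def)
next
  case False
  let ?L = "real (card J) * w / 2"
  have L: "?L > 0" using False J w by (simp add: card_gt_0_iff)
  have eq: "?L * (1 / ?L) powr (1 - 1/real d) = ?L powr (1/real d)"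
    using L by (simp add: powr_divide powr_diff powr_minus_divide field_simps)
  have dP: "deriv (PhiJ J w \<delta>) = psiJ J w \<delta>" using dl by (intro deriv_PhiJ) simp
  have "(\<integral>t. \<rho> t * deriv (PhiJ J w \<delta>) t \<partial>lborel) \<le> K * ?L * (1 / ?L) powr (1 - 1/real d)"
  proof (rule SBd_scaled[OF SB K d Cb_inf_PhiJ[OF J dl] L])
    show "\<bar>PhiJ J w \<delta> x\<bar> \<le> ?L" for x using PhiJ_bound[OF dl] w by simp
    show "\<bar>deriv (PhiJ J w \<delta>) x\<bar> \<le> 1" for x
      using deriv_PhiJ[of \<delta>] dl psiJ_nonneg[OF dl, of w J x] psiJ_le1[OF J dl, of w x] w by simp
  qed (use w in auto)
  then show ?thesis unfolding dP mult.assoc eq .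
qed

lemma smk_borel: "smk k g \<Longrightarrow> g \<in> borel_measurable borel"
  by (intro borel_measurable_continuous_onI differentiable_imp_continuous_on)
     (auto simp: differentiable_on_def intro: differentiable_at_withinI smk_diff)

lemma Cb_inf_borel: "Cb_inf g \<Longrightarrow> g \<in> borel_measurable borel"
  unfolding Cb_inf_smk using smk_borel by blast

lemma tanh_lim_pos: "c > 0 \<Longrightarrow> (\<lambda>n. tanh (c * (real n + 1))) \<longlonglongrightarrow> 1"
proof -
  assume c: "c > 0"
  have "filterlim (\<lambda>n. 1 + real n) at_top sequentially"
    by (rule filterlim_tendsto_add_at_top[OF tendsto_const filterlim_real_sequentially])
  then have "filterlim (\<lambda>n. real n + 1) at_top sequentially" by (simp add: add.commute)
  then have "filterlim (\<lambda>n. c * (real n + 1)) at_top sequentially"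
    using filterlim_tendsto_pos_mult_at_top[OF tendsto_const c] by blast
  then show ?thesis by (rule filterlim_compose[OF tanh_real_at_top])
qed

lemma tanh_lim: "c \<noteq> 0 \<Longrightarrow> (\<lambda>n. tanh (c * (real n + 1))) \<longlonglongrightarrow> sgn c"
proof (cases "c > 0")
  case True then show ?thesis using tanh_lim_pos by simp
next
  case False
  assume "c \<noteq> 0"
  with False have "-c > 0" by simp
  from tendsto_minus[OF tanh_lim_pos[OF this]] show ?thesis using False \<open>c \<noteq> 0\<close> by simp
qed

lemma pc_lim:
  fixes w x :: real and j :: int
  assumes w: "w > 0" and x: "\<forall>i::int. x \<noteq> real_of_int i * w"
  shows "(\<lambda>n. pc w (1 / (real n + 1)) j x) \<longlonglongrightarrow> indicator {real_of_int j*w <..< real_of_int (j+1)*w} x"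
proof -
  have e: "pc w (1 / (real n + 1)) j x = (tanh ((x - real_of_int j*w) * (real n + 1)) - tanh ((x - real_of_int (j+1)*w) * (real n + 1)))/2" for n
    unfolding pc_def by simp
  have a: "x - real_of_int j*w \<noteq> 0" using x by auto
  have b: "x - real_of_int (j+1)*w \<noteq> 0" using x[rule_format, of "j+1"] by auto
  have "(\<lambda>n. pc w (1 / (real n + 1)) j x) \<longlonglongrightarrow> (sgn (x - real_of_int j*w) - sgn (x - real_of_int (j+1)*w)) / 2"
    unfolding e by (intro tendsto_divide tendsto_diff tanh_lim a b tendsto_const) simp
  also have "(sgn (x - real_of_int j*w) - sgn (x - real_of_int (j+1)*w)) / 2 = indicator {real_of_int j*w <..< real_of_int (j+1)*w} x"
  proof -
    have "real_of_int j * w < real_of_int (j+1)*w" using w by simp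
    then show ?thesis using a b by (auto simp: indicator_def sgn_if)
  qed
  finally show ?thesis .
qed

lemma GU_indicator:
  fixes w x :: real and J :: "int set"
  assumes J: "finite J" and w: "w > 0"
  shows "indicator (GU J w) x = (\<Sum>j\<in>J. indicator {real_of_int j*w <..< real_of_int (j+1)*w} x :: real)"
  unfolding GU_def
proof (rule indicator_UN_disjoint[OF J])
  show "disjoint_family_on (\<lambda>j. {real_of_int j*w <..< real_of_int (j+1)*w}) J"
    unfolding disjoint_family_on_def
  proof (intro ballI impI)
    fix j k :: int assume "j \<noteq> k"
    show "{real_of_int j*w <..< real_of_int (j+1)*w} \<inter> {real_of_int k*w <..< real_of_int (k+1)*w} = {}"
    proof -
      have "j + 1 \<le> k \<or> k + 1 \<le> j" using \<open>j \<noteq> k\<close> by linarith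
      then have "real_of_int (j+1) * w \<le> real_of_int k * w \<or> real_of_int (k+1) * w \<le> real_of_int j * w"
        using w by (auto intro: mult_right_mono simp only: of_int_le_iff less_imp_le)
      then show ?thesis by auto
    qed
  qed
qed

lemma psiJ_lim:
  fixes w x :: real and J :: "int set"
  assumes J: "finite J" and w: "w > 0" and x: "\<forall>i::int. x \<noteq> real_of_int i * w"
  shows "(\<lambda>n. psiJ J w (1 / (real n + 1)) x) \<longlonglongrightarrow> indicator (GU J w) x"
  unfolding psiJ_def GU_indicator[OF J w] by (intro tendsto_sum pc_lim w x)

lemma grid_null: "(w::real) > 0 \<Longrightarrow> AE x in lborel. \<forall>i::int. x \<noteq> real_of_int i * w"
proof -
  have "countable (range (\<lambda>i::int. real_of_int i * w))" by simp
  then have "range (\<lambda>i::int. real_of_int i * w) \<in> null_sets lborel" by (rule countable_imp_null_set_lborel)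
  from AE_not_in[OF this] show "AE x in lborel. \<forall>i::int. x \<noteq> real_of_int i * w" by (rule AE_mp) auto
qed

lemma GU_borel: "GU J w \<in> sets borel"
  unfolding GU_def by (intro borel_open open_UN) auto

lemma SBd_grid:
  assumes SB: "SBd \<rho> K d" and K: "K \<ge> 0" and d: "d \<ge> 1" and J: "finite J" and w: "w > 0"
    and rho: "integrable lborel \<rho>" "\<And>t. \<rho> t \<ge> 0"
  shows "(\<integral>t. \<rho> t * indicator (GU J w) t \<partial>lborel) \<le> K * (real (card J) * w / 2) powr (1/real d)"
proof -
  have lim: "(\<lambda>n. \<integral>t. \<rho> t * psiJ J w (1 / (real n + 1)) t \<partial>lborel) \<longlonglongrightarrow> (\<integral>t. \<rho> t * indicator (GU J w) t \<partial>lborel)"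
  proof (rule integral_dominated_convergence[where w=\<rho>])
    show "(\<lambda>t. \<rho> t * indicator (GU J w) t) \<in> borel_measurable lborel"
      using rho(1) GU_borel by (auto intro!: borel_measurable_times borel_measurable_indicator)
    show "(\<lambda>t. \<rho> t * psiJ J w (1 / (real n + 1)) t) \<in> borel_measurable lborel" for n
      using rho(1) smk_borel[OF smk_psiJ[OF J, of 0 w "1 / (real n + 1)"]] by auto
    show "AE t in lborel. (\<lambda>n. \<rho> t * psiJ J w (1 / (real n + 1)) t) \<longlonglongrightarrow> \<rho> t * indicator (GU J w) t"
      using grid_null[OF w] by (rule AE_mp) (auto intro!: tendsto_mult tendsto_const psiJ_lim J w)
    show "AE t in lborel. norm (\<rho> t * psiJ J w (1 / (real n + 1)) t) \<le> \<rho> t" for n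
    proof (rule AE_I2)
      fix t
      have "0 \<le> psiJ J w (1 / (real n + 1)) t" "psiJ J w (1 / (real n + 1)) t \<le> 1"
        using psiJ_nonneg[of "1 / (real n + 1)" w J t] psiJ_le1[OF J, of "1 / (real n + 1)" w t] w by auto
      then show "norm (\<rho> t * psiJ J w (1 / (real n + 1)) t) \<le> \<rho> t"
        using rho(2)[of t] by (simp add: abs_mult mult_left_le)
    qed
  qed (use rho in auto)
  show ?thesis
    by (rule LIMSEQ_le_const2[OF lim]) (use SBd_grid_smooth[OF SB K d J w] in auto)
qed

lemma GU_disjoint:
  fixes w :: real and J :: "int set"
  assumes w: "w > 0"
  shows "disjoint_family_on (\<lambda>j. {real_of_int j*w <..< real_of_int (j+1)*w}) J"
  unfolding disjoint_family_on_def
proof (intro ballI impI)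
  fix j k :: int assume "j \<noteq> k"
  have "j + 1 \<le> k \<or> k + 1 \<le> j" using \<open>j \<noteq> k\<close> by linarith
  then have "real_of_int (j+1) * w \<le> real_of_int k * w \<or> real_of_int (k+1) * w \<le> real_of_int j * w"
    using w by (auto intro: mult_right_mono simp only: of_int_le_iff less_imp_le)
  then show "{real_of_int j*w <..< real_of_int (j+1)*w} \<inter> {real_of_int k*w <..< real_of_int (k+1)*w} = {}"
    by auto
qed

lemma measure_GU:
  fixes w :: real and J :: "int set"
  assumes J: "finite J" and w: "w > 0"
  shows "measure lborel (GU J w) = real (card J) * w"
proof -
  have "measure lborel (GU J w) = (\<Sum>j\<in>J. measure lborel {real_of_int j*w <..< real_of_int (j+1)*w})"
    unfolding GU_def
  proof (rule measure_finite_Union[OF J _ GU_disjoint[OF w]])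
    fix j :: int
    have "real_of_int j * w \<le> real_of_int (j+1) * w" using w by simp
    then show "emeasure lborel {real_of_int j*w <..< real_of_int (j+1)*w} \<noteq> \<infinity>" by simp
  qed auto
  also have "\<dots> = (\<Sum>j\<in>J. w)"
  proof (rule sum.cong[OF refl])
    fix j
    have "real_of_int j*w \<le> real_of_int (j+1)*w" using w by simp
    then show "measure lborel {real_of_int j*w <..< real_of_int (j+1)*w} = w"
      by (simp add: algebra_simps)
  qed
  finally show ?thesis by simp
qed

lemma dyadic_null: "AE x in lborel. \<forall>n::nat. \<forall>i::int. x \<noteq> real_of_int i * (1/2)^n"
proof -
  have "countable (\<Union>n::nat. range (\<lambda>i::int. real_of_int i * (1/2)^n))" by simp
  then have "(\<Union>n::nat. range (\<lambda>i::int. real_of_int i * (1/2)^n)) \<in> null_sets lborel"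
    by (rule countable_imp_null_set_lborel)
  from AE_not_in[OF this] show ?thesis by (rule AE_mp) auto
qed

definition Jn :: "real set \<Rightarrow> nat \<Rightarrow> int set" where
  "Jn U n = {j \<in> {- int (n * 2^n) .. int (n * 2^n)}. {real_of_int j * (1/2)^n .. real_of_int (j+1) * (1/2)^n} \<subseteq> U}"

lemma finite_Jn: "finite (Jn U n)"
  unfolding Jn_def by (rule finite_subset[of _ "{- int (n * 2^n) .. int (n * 2^n)}"]) auto

lemma GU_Jn_sub: "GU (Jn U n) ((1/2)^n) \<subseteq> U"
  unfolding GU_def Jn_def by auto

lemma GU_Jn_lim:
  assumes U: "open U" and x: "\<forall>n::nat. \<forall>i::int. x \<noteq> real_of_int i * (1/2)^n"
  shows "(\<lambda>n. indicator (GU (Jn U n) ((1/2)^n)) x :: real) \<longlonglongrightarrow> indicator U x"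
proof (cases "x \<in> U")
  case False
  then have "x \<notin> GU (Jn U n) ((1/2)^n)" for n using GU_Jn_sub by blast
  then show ?thesis using False by simp
next
  case True
  obtain r where r: "r > 0" "ball x r \<subseteq> U" using U True open_contains_ball by blast
  obtain N1 :: nat where N1: "(1/2)^N1 < r" using real_arch_pow_inv[OF r(1), of "1/2"] by auto
  obtain N2 :: nat where N2: "\<bar>x\<bar> + 1 \<le> real N2" using real_arch_simple by blast
  have "eventually (\<lambda>n. x \<in> GU (Jn U n) ((1/2)^n)) sequentially"
    unfolding eventually_sequentially
  proof (intro exI[of _ "max N1 N2"] allI impI)
    fix n assume n: "max N1 N2 \<le> n"
    define w :: real where "w = (1/2)^n"
    have w: "w > 0" unfolding w_def by simp
    have wr: "w < r"
    proof -
      have "w \<le> (1/2)^N1" unfolding w_def using n by (intro power_decreasing) auto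
      then show ?thesis using N1 by simp
    qed
    define j where "j = \<lfloor>x / w\<rfloor>"
    have j1: "real_of_int j \<le> x / w" "x / w < real_of_int j + 1" unfolding j_def by linarith+
    have jx: "real_of_int j * w \<le> x" "x < real_of_int (j+1) * w"
      using j1 w by (auto simp: field_simps)
    have "x \<noteq> real_of_int j * w" using x unfolding w_def by blast
    with jx have jx': "real_of_int j * w < x" by simp
    have sub: "{real_of_int j * w .. real_of_int (j+1) * w} \<subseteq> U"
    proof
      fix y assume "y \<in> {real_of_int j * w .. real_of_int (j+1) * w}"
      then have "\<bar>y - x\<bar> \<le> w" using jx by (auto simp: algebra_simps)
      then have "y \<in> ball x r" using wr by (simp add: dist_real_def abs_minus_commute)
      then show "y \<in> U" using r by blast
    qed
    have "\<bar>x / w\<bar> \<le> real n * 2^n - 1"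
    proof -
      have "\<bar>x / w\<bar> = \<bar>x\<bar> * 2^n" unfolding w_def by (simp add: abs_divide power_one_over abs_mult)
      also have "\<dots> \<le> (real n - 1) * 2^n" using N2 n by (intro mult_right_mono) auto
      also have "\<dots> \<le> real n * 2^n - 1"
      proof -
        have "(1::real) \<le> 2^n" by simp
        then show ?thesis by (simp add: algebra_simps)
      qed
      finally show ?thesis .
    qed
    then have a: "\<bar>x / w\<bar> \<le> real_of_int (int (n * 2^n)) - 1" by simp
    have b1: "real_of_int j \<le> real_of_int (int (n * 2^n))" using a j1 unfolding abs_le_iff by linarith
    have b2: "real_of_int (- int (n * 2^n)) < real_of_int (j + 1)" using a j1 unfolding abs_le_iff by linarith
    have "\<bar>j\<bar> \<le> int (n * 2^n)" using b1 b2 unfolding of_int_le_iff of_int_less_iff by linarith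
    then have "j \<in> Jn U n" unfolding Jn_def using sub w_def by auto
    then show "x \<in> GU (Jn U n) ((1/2)^n)"
      unfolding GU_def using jx' jx w_def by auto
  qed
  then show ?thesis using True
    by (simp add: tendsto_eventually eventually_mono)
qed

lemma inv_Suc_lim: "(\<lambda>n. 1 / (real n + 1)) \<longlonglongrightarrow> 0"
  using LIMSEQ_Suc[OF lim_1_over_n] by (simp add: add.commute)

lemma SBd_open:
  assumes SB: "SBd \<rho> K d" and K: "K \<ge> 0" and d: "d \<ge> 1"
    and rho: "integrable lborel \<rho>" "\<And>t. \<rho> t \<ge> 0"
    and U: "open U" "emeasure lborel U < \<infinity>"
  shows "(\<integral>t. \<rho> t * indicator U t \<partial>lborel) \<le> K * (measure lborel U / 2) powr (1/real d)"
proof -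
  have Ub: "U \<in> sets borel" using U by auto
  have lim: "(\<lambda>n. \<integral>t. \<rho> t * indicator (GU (Jn U n) ((1/2)^n)) t \<partial>lborel) \<longlonglongrightarrow> (\<integral>t. \<rho> t * indicator U t \<partial>lborel)"
  proof (rule integral_dominated_convergence[where w=\<rho>])
    show "(\<lambda>t. \<rho> t * indicator U t) \<in> borel_measurable lborel"
      using rho(1) Ub by (auto intro!: borel_measurable_times borel_measurable_indicator)
    show "(\<lambda>t. \<rho> t * indicator (GU (Jn U n) ((1/2)^n)) t) \<in> borel_measurable lborel" for n
      using rho(1) GU_borel by (auto intro!: borel_measurable_times borel_measurable_indicator)
    show "AE t in lborel. (\<lambda>n. \<rho> t * indicator (GU (Jn U n) ((1/2)^n)) t) \<longlonglongrightarrow> \<rho> t * indicator U t"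
      using dyadic_null by (rule AE_mp) (auto intro!: tendsto_mult tendsto_const GU_Jn_lim U)
    show "AE t in lborel. norm (\<rho> t * indicator (GU (Jn U n) ((1/2)^n)) t) \<le> \<rho> t" for n
      using rho(2) by (auto simp: indicator_def)
  qed (use rho in auto)
  have bnd: "(\<integral>t. \<rho> t * indicator (GU (Jn U n) ((1/2)^n)) t \<partial>lborel) \<le> K * (measure lborel U / 2) powr (1/real d)" for n
  proof -
    have w: "(0::real) < (1/2)^n" by simp
    have "(\<integral>t. \<rho> t * indicator (GU (Jn U n) ((1/2)^n)) t \<partial>lborel)
          \<le> K * (real (card (Jn U n)) * (1/2)^n / 2) powr (1/real d)"
      by (rule SBd_grid[OF SB K d finite_Jn w rho])
    also have "\<dots> \<le> K * (measure lborel U / 2) powr (1/real d)"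
    proof (intro mult_left_mono K powr_mono2 divide_right_mono)
      have "real (card (Jn U n)) * (1/2)^n = measure lborel (GU (Jn U n) ((1/2)^n))"
        by (rule measure_GU[OF finite_Jn w, symmetric])
      also have "\<dots> \<le> measure lborel U"
        by (rule measure_mono_fmeasurable[OF GU_Jn_sub]) (use GU_borel U Ub in \<open>auto intro: fmeasurableI\<close>)
      finally show "real (card (Jn U n)) * (1/2)^n \<le> measure lborel U" .
    qed auto
    finally show ?thesis .
  qed
  show ?thesis by (rule LIMSEQ_le_const2[OF lim]) (use bnd in auto)
qed

lemma SBd_borel:
  assumes SB: "SBd \<rho> K d" and K: "K \<ge> 0" and d: "d \<ge> 1"
    and rho: "integrable lborel \<rho>" "\<And>t. \<rho> t \<ge> 0"
    and A: "A \<in> sets borel" "emeasure lborel A < \<infinity>"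
  shows "(\<integral>t. \<rho> t * indicator A t \<partial>lborel) \<le> K * (measure lborel A / 2) powr (1/real d)"
proof -
  have bnd: "(\<integral>t. \<rho> t * indicator A t \<partial>lborel) \<le> K * ((measure lborel A + 1 / (real n + 1)) / 2) powr (1/real d)" for n
  proof -
    define e where "e = 1 / (real n + 1)"
    have e: "e > 0" unfolding e_def by simp
    obtain U where U: "open U" "A \<subseteq> U" "emeasure lborel (U - A) < e"
      using outer_regular_lborel[OF A(1) e] by blast
    have Ub: "U \<in> sets borel" using U by auto
    have fUA: "emeasure lborel (U - A) < \<infinity>" by (rule order.strict_trans[OF U(3)]) simp
    have "emeasure lborel U \<le> emeasure lborel (A \<union> (U - A))" using U(2) by (intro emeasure_mono) (auto simp: Ub A)
    also have "\<dots> \<le> emeasure lborel A + emeasure lborel (U - A)" by (rule emeasure_subadditive) (auto simp: Ub A)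
    also have "\<dots> < \<infinity>" using A(2) fUA by (simp add: ennreal_add_less_top)
    finally have Uf: "emeasure lborel U < \<infinity>" .
    have "measure lborel (U - A) = measure lborel U - measure lborel A"
      by (rule measure_Diff) (use Uf Ub A U in auto)
    moreover have "measure lborel (U - A) < e"
    proof -
      have "emeasure lborel (U - A) = ennreal (measure lborel (U - A))"
        using fUA by (intro emeasure_eq_ennreal_measure) simp
      then show ?thesis using U(3) e by (simp add: ennreal_less_iff)
    qed
    ultimately have mU: "measure lborel U \<le> measure lborel A + e" by simp
    have "(\<integral>t. \<rho> t * indicator A t \<partial>lborel) \<le> (\<integral>t. \<rho> t * indicator U t \<partial>lborel)"
      using rho U(2) by (intro integral_mono integrable_real_mult_indicator) (auto simp: Ub A indicator_def)
    also have "\<dots> \<le> K * (measure lborel U / 2) powr (1/real d)"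
      by (rule SBd_open[OF SB K d rho U(1) Uf])
    also have "\<dots> \<le> K * ((measure lborel A + e) / 2) powr (1/real d)"
      using mU by (intro mult_left_mono K powr_mono2 divide_right_mono) auto
    finally show ?thesis unfolding e_def .
  qed
  have lim: "(\<lambda>n. K * ((measure lborel A + 1 / (real n + 1)) / 2) powr (1/real d)) \<longlonglongrightarrow> K * ((measure lborel A + 0) / 2) powr (1/real d)"
    using d by (intro tendsto_intros inv_Suc_lim) auto
  then have lim: "(\<lambda>n. K * ((measure lborel A + 1 / (real n + 1)) / 2) powr (1/real d)) \<longlonglongrightarrow> K * (measure lborel A / 2) powr (1/real d)"
    by simp
  show ?thesis
    by (rule LIMSEQ_le_const[OF lim]) (use bnd in auto)
qed

lemma integrable_rho_bounded:
  assumes rho: "integrable lborel (\<rho>::real\<Rightarrow>real)" and phi: "\<phi> \<in> borel_measurable borel" "\<And>t. \<bar>\<phi> t\<bar> \<le> B"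
  shows "integrable lborel (\<lambda>t. \<rho> t * \<phi> t)"
proof (rule Bochner_Integration.integrable_bound[of lborel "\<lambda>t. B * \<rho> t"])
  show "integrable lborel (\<lambda>t. B * \<rho> t)" using rho by simp
  show "(\<lambda>t. \<rho> t * \<phi> t) \<in> borel_measurable lborel" using rho phi by auto
  show "AE t in lborel. norm (\<rho> t * \<phi> t) \<le> norm (B * \<rho> t)"
  proof (rule AE_I2)
    fix t
    have "\<bar>\<rho> t\<bar> * \<bar>\<phi> t\<bar> \<le> \<bar>\<rho> t\<bar> * B" by (intro mult_left_mono phi) simp
    moreover have "B \<ge> 0" using phi(2)[of t] by simp
    ultimately show "norm (\<rho> t * \<phi> t) \<le> norm (B * \<rho> t)" by (simp add: abs_mult mult.commute)
  qed
qed

lemma abs_mult_le1: "0 \<le> (r::real) \<Longrightarrow> \<bar>p\<bar> \<le> 1 \<Longrightarrow> \<bar>r * p\<bar> \<le> r"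
  by (simp add: abs_mult mult_left_le)

lemma density_integral:
  assumes rho: "integrable lborel (\<rho>::real\<Rightarrow>real)" "\<And>t. \<rho> t \<ge> 0" and phi: "\<phi> \<in> borel_measurable borel"
  shows "(\<integral>x. \<phi> x \<partial>density lborel (\<lambda>t. ennreal (\<rho> t))) = (\<integral>t. \<rho> t * \<phi> t \<partial>lborel)"
  using integral_density[of \<phi> lborel \<rho>] rho phi by simp

definition TVset :: "(real \<Rightarrow> real) \<Rightarrow> (real \<Rightarrow> real) \<Rightarrow> real set" where
  "TVset rf rg = {(\<integral>x. \<phi> x \<partial>density lborel (\<lambda>t. ennreal (rf t))) - (\<integral>x. \<phi> x \<partial>density lborel (\<lambda>t. ennreal (rg t))) | \<phi>.
      Cb_inf \<phi> \<and> (\<forall>x. \<bar>\<phi> x\<bar> \<le> 1)}"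

lemma TV_dist_eq: "TV_dist (density lborel (\<lambda>t. ennreal (rf t))) (density lborel (\<lambda>t. ennreal (rg t))) = Sup (TVset rf rg)"
  unfolding TV_dist_def TVset_def ..

lemma TV_elem:
  assumes f: "integrable lborel rf" "\<And>t. rf t \<ge> 0" and g: "integrable lborel rg" "\<And>t. rg t \<ge> 0"
    and phi: "Cb_inf \<phi>" "\<And>x. \<bar>\<phi> x\<bar> \<le> 1"
  shows "(\<integral>t. (rf t - rg t) * \<phi> t \<partial>lborel) \<in> TVset rf rg"
proof -
  have pb: "\<phi> \<in> borel_measurable borel" by (rule Cb_inf_borel[OF phi(1)])
  have "(\<integral>t. (rf t - rg t) * \<phi> t \<partial>lborel) = (\<integral>t. rf t * \<phi> t \<partial>lborel) - (\<integral>t. rg t * \<phi> t \<partial>lborel)"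
    unfolding left_diff_distrib
    by (rule Bochner_Integration.integral_diff) (use integrable_rho_bounded[OF f(1) pb phi(2)] integrable_rho_bounded[OF g(1) pb phi(2)] in auto)
  also have "\<dots> = (\<integral>x. \<phi> x \<partial>density lborel (\<lambda>t. ennreal (rf t))) - (\<integral>x. \<phi> x \<partial>density lborel (\<lambda>t. ennreal (rg t)))"
    using density_integral[OF f pb] density_integral[OF g pb] by simp
  finally show ?thesis unfolding TVset_def using phi by blast
qed

lemma TVset_bdd:
  assumes f: "integrable lborel rf" "\<And>t. rf t \<ge> 0" and g: "integrable lborel rg" "\<And>t. rg t \<ge> 0"
  shows "bdd_above (TVset rf rg)" and "TVset rf rg \<noteq> {}"
proof -
  show "bdd_above (TVset rf rg)"
  proof (rule bdd_aboveI)
    fix y assume "y \<in> TVset rf rg"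
    then obtain \<phi> where phi: "Cb_inf \<phi>" "\<And>x. \<bar>\<phi> x\<bar> \<le> 1"
      and y: "y = (\<integral>x. \<phi> x \<partial>density lborel (\<lambda>t. ennreal (rf t))) - (\<integral>x. \<phi> x \<partial>density lborel (\<lambda>t. ennreal (rg t)))"
      unfolding TVset_def by blast
    have pb: "\<phi> \<in> borel_measurable borel" by (rule Cb_inf_borel[OF phi(1)])
    have b: "(\<integral>t. r t * \<phi> t \<partial>lborel) \<le> (\<integral>t. r t \<partial>lborel)" and b2: "- (\<integral>t. r t * \<phi> t \<partial>lborel) \<le> (\<integral>t. r t \<partial>lborel)"
      if r: "integrable lborel r" "\<And>t. r t \<ge> 0" for r
    proof -
      have a: "\<bar>r t * \<phi> t\<bar> \<le> r t" for t by (rule abs_mult_le1[OF r(2) phi(2)])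
      have "(\<integral>t. r t * \<phi> t \<partial>lborel) \<le> (\<integral>t. r t \<partial>lborel)"
        using integrable_rho_bounded[OF r(1) pb phi(2)] r a
        by (intro integral_mono) (auto simp: abs_le_iff)
      moreover have "(\<integral>t. - (r t * \<phi> t) \<partial>lborel) \<le> (\<integral>t. r t \<partial>lborel)"
        using integrable_rho_bounded[OF r(1) pb phi(2)] r a
        by (intro integral_mono) (auto simp: abs_le_iff)
      ultimately show "(\<integral>t. r t * \<phi> t \<partial>lborel) \<le> (\<integral>t. r t \<partial>lborel)" "- (\<integral>t. r t * \<phi> t \<partial>lborel) \<le> (\<integral>t. r t \<partial>lborel)"
        by simp_all
    qed
    show "y \<le> (\<integral>t. rf t \<partial>lborel) + (\<integral>t. rg t \<partial>lborel)"
      unfolding y density_integral[OF f pb] density_integral[OF g pb]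
      using b[OF f] b2[OF g] by linarith
  qed
  have "(\<integral>t. (rf t - rg t) * 0 \<partial>lborel) \<in> TVset rf rg"
    by (rule TV_elem[OF f g]) (auto simp: Cb_inf_smk intro: smk_const)
  then show "TVset rf rg \<noteq> {}" by blast
qed

lemma TV_open:
  assumes f: "integrable lborel rf" "\<And>t. rf t \<ge> 0" and g: "integrable lborel rg" "\<And>t. rg t \<ge> 0"
    and U: "open U"
  shows "(\<integral>t. (rf t - rg t) * (2 * indicator U t - 1) \<partial>lborel) \<le> Sup (TVset rf rg)"
proof -
  let ?h = "\<lambda>t. rf t - rg t"
  have hi: "integrable lborel ?h" using f g by simp
  have Ub: "U \<in> sets borel" using U by auto
  define G where "G n = GU (Jn U n) ((1/2)^n)" for n
  have Gb: "G n \<in> sets borel" for n unfolding G_def by (rule GU_borel)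
  have step: "(\<integral>t. ?h t * (2 * indicator (G n) t - 1) \<partial>lborel) \<le> Sup (TVset rf rg)" for n
  proof -
    define w :: real where "w = (1/2)^n"
    have w: "w > 0" unfolding w_def by simp
    have lim: "(\<lambda>m. \<integral>t. ?h t * (2 * psiJ (Jn U n) w (1 / (real m + 1)) t - 1) \<partial>lborel)
        \<longlonglongrightarrow> (\<integral>t. ?h t * (2 * indicator (G n) t - 1) \<partial>lborel)"
    proof (rule integral_dominated_convergence[where w="\<lambda>t. \<bar>?h t\<bar>"])
      show "(\<lambda>t. ?h t * (2 * indicator (G n) t - 1)) \<in> borel_measurable lborel"
        using hi Gb by (auto intro!: borel_measurable_times borel_measurable_indicator borel_measurable_diff)
      show "(\<lambda>t. ?h t * (2 * psiJ (Jn U n) w (1 / (real m + 1)) t - 1)) \<in> borel_measurable lborel" for m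
        using hi smk_borel[OF smk_psiJ[OF finite_Jn, of 0 U n w "1 / (real m + 1)"]] by auto
      show "AE t in lborel. (\<lambda>m. ?h t * (2 * psiJ (Jn U n) w (1 / (real m + 1)) t - 1)) \<longlonglongrightarrow> ?h t * (2 * indicator (G n) t - 1)"
        using grid_null[OF w] by (rule AE_mp) (auto simp: G_def w_def intro!: tendsto_intros psiJ_lim finite_Jn)
      show "AE t in lborel. norm (?h t * (2 * psiJ (Jn U n) w (1 / (real m + 1)) t - 1)) \<le> \<bar>?h t\<bar>" for m
      proof (rule AE_I2)
        fix t
        have "0 \<le> psiJ (Jn U n) w (1 / (real m + 1)) t" "psiJ (Jn U n) w (1 / (real m + 1)) t \<le> 1"
          using psiJ_nonneg[of "1 / (real m + 1)" w "Jn U n" t] psiJ_le1[OF finite_Jn, of "1 / (real m + 1)" w U n t] w by auto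
        then have "\<bar>2 * psiJ (Jn U n) w (1 / (real m + 1)) t - 1\<bar> \<le> 1" by (simp add: abs_le_iff)
        then show "norm (?h t * (2 * psiJ (Jn U n) w (1 / (real m + 1)) t - 1)) \<le> \<bar>?h t\<bar>"
          by (simp add: abs_mult mult_left_le)
      qed
    qed (use hi in auto)
    have elem: "(\<integral>t. ?h t * (2 * psiJ (Jn U n) w (1 / (real m + 1)) t - 1) \<partial>lborel) \<le> Sup (TVset rf rg)" for m
    proof (rule cSup_upper[OF TV_elem[OF f g] TVset_bdd(1)[OF f g]])
      show "Cb_inf (\<lambda>t. 2 * psiJ (Jn U n) w (1 / (real m + 1)) t - 1)"
        unfolding Cb_inf_smk using smk_add[OF smk_cmult[OF smk_psiJ[OF finite_Jn]] smk_const, of _ 2 U n w "1 / (real m + 1)" "-1"]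
        by simp
      have "0 \<le> psiJ (Jn U n) w (1 / (real m + 1)) t" "psiJ (Jn U n) w (1 / (real m + 1)) t \<le> 1" for t
        using psiJ_nonneg[of "1 / (real m + 1)" w "Jn U n" t] psiJ_le1[OF finite_Jn, of "1 / (real m + 1)" w U n t] w by auto
      then show "\<bar>2 * psiJ (Jn U n) w (1 / (real m + 1)) t - 1\<bar> \<le> 1" for t by (simp add: abs_le_iff)
    qed
    show ?thesis by (rule LIMSEQ_le_const2[OF lim]) (use elem in auto)
  qed
  have lim: "(\<lambda>n. \<integral>t. ?h t * (2 * indicator (G n) t - 1) \<partial>lborel) \<longlonglongrightarrow> (\<integral>t. ?h t * (2 * indicator U t - 1) \<partial>lborel)"
  proof (rule integral_dominated_convergence[where w="\<lambda>t. \<bar>?h t\<bar>"])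
    show "(\<lambda>t. ?h t * (2 * indicator U t - 1)) \<in> borel_measurable lborel"
      using hi Ub by (auto intro!: borel_measurable_times borel_measurable_indicator borel_measurable_diff)
    show "(\<lambda>t. ?h t * (2 * indicator (G n) t - 1)) \<in> borel_measurable lborel" for n
      using hi Gb by (auto intro!: borel_measurable_times borel_measurable_indicator borel_measurable_diff)
    show "AE t in lborel. (\<lambda>n. ?h t * (2 * indicator (G n) t - 1)) \<longlonglongrightarrow> ?h t * (2 * indicator U t - 1)"
      using dyadic_null by (rule AE_mp) (auto simp: G_def intro!: tendsto_intros GU_Jn_lim U)
    show "AE t in lborel. norm (?h t * (2 * indicator (G n) t - 1)) \<le> \<bar>?h t\<bar>" for n
      by (rule AE_I2) (auto simp: indicator_def abs_mult)
  qed (use hi in auto)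
  show ?thesis by (rule LIMSEQ_le_const2[OF lim]) (use step in auto)
qed

lemma TV_lower:
  assumes f: "integrable lborel rf" "\<And>t. rf t \<ge> 0" and g: "integrable lborel rg" "\<And>t. rg t \<ge> 0"
  shows "(\<integral>t. \<bar>rf t - rg t\<bar> \<partial>lborel) \<le> Sup (TVset rf rg)"
proof -
  let ?h = "\<lambda>t. rf t - rg t" and ?s = "\<lambda>t. rf t + rg t"
  have hi: "integrable lborel ?h" and si: "integrable lborel ?s" using f g by simp_all
  have hb: "?h \<in> borel_measurable borel" and sb: "?s \<in> borel_measurable borel" using hi si by auto
  define P where "P = {t. ?h t > 0}"
  have Pb: "P \<in> sets borel" unfolding P_def using hb by measurable
  define \<nu> where "\<nu> = density lborel (\<lambda>t. ennreal (?s t))"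
  have snu: "sets \<nu> = sets borel" unfolding \<nu>_def by simp
  have nuP: "emeasure \<nu> A = ennreal (\<integral>t. ?s t * indicator A t \<partial>lborel)" if A: "A \<in> sets borel" for A
  proof -
    have "emeasure \<nu> A = (\<integral>\<^sup>+t. ennreal (?s t) * indicator A t \<partial>lborel)"
      unfolding \<nu>_def by (rule emeasure_density) (use sb A in auto)
    also have "\<dots> = (\<integral>\<^sup>+t. ennreal (?s t * indicator A t) \<partial>lborel)"
      by (intro nn_integral_cong) (auto simp: indicator_def)
    also have "\<dots> = ennreal (\<integral>t. ?s t * indicator A t \<partial>lborel)"
      by (rule nn_integral_eq_integral) (use integrable_real_mult_indicator[OF _ si, of A] A f g in \<open>auto simp: indicator_def\<close>)
    finally show ?thesis .
  qed
  have fin: "emeasure \<nu> (space \<nu>) \<noteq> \<infinity>"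
    using nuP[of UNIV] snu by (simp add: sets_eq_imp_space_eq[OF snu])
  have key: "(\<integral>t. \<bar>?h t\<bar> \<partial>lborel) \<le> Sup (TVset rf rg) + 2 * e" if e: "e > 0" for e
  proof -
    have "emeasure \<nu> P = (INF U \<in> {U. P \<subseteq> U \<and> open U}. emeasure \<nu> U)"
      by (rule outer_regular[OF snu fin Pb])
    moreover have "emeasure \<nu> P < emeasure \<nu> P + ennreal e"
      using nuP[OF Pb] e by (simp add: ennreal_plus[symmetric] del: ennreal_plus)
    ultimately obtain U where U: "P \<subseteq> U" "open U" "emeasure \<nu> U < emeasure \<nu> P + ennreal e"
      by (metis (no_types, lifting) INF_less_iff mem_Collect_eq)
    have Ub: "U \<in> sets borel" using U by auto
    have "emeasure \<nu> P + emeasure \<nu> (U - P) = emeasure \<nu> (P \<union> (U - P))"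
      by (rule plus_emeasure) (auto simp: snu Pb Ub)
    also have "P \<union> (U - P) = U" using U by auto
    finally have "emeasure \<nu> P + emeasure \<nu> (U - P) < emeasure \<nu> P + ennreal e" using U(3) by simp
    then have "emeasure \<nu> (U - P) < ennreal e" by (simp add: ennreal_add_left_cancel_less)
    then have sm: "ennreal (\<integral>t. ?s t * indicator (U - P) t \<partial>lborel) < ennreal e"
      using nuP[of "U - P"] Ub Pb by auto
    have small: "(\<integral>t. ?s t * indicator (U - P) t \<partial>lborel) < e"
    proof (cases "0 \<le> (\<integral>t. ?s t * indicator (U - P) t \<partial>lborel)")
      case True then show ?thesis using sm by (simp add: ennreal_less_iff)
    next
      case False then show ?thesis using e by linarith
    qed
    have eq1: "(\<integral>t. \<bar>?h t\<bar> \<partial>lborel) = (\<integral>t. ?h t * (2 * indicator P t - 1) \<partial>lborel)"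
      by (rule Bochner_Integration.integral_cong) (auto simp: P_def indicator_def)
    have "(\<integral>t. ?h t * (2 * indicator U t - 1) \<partial>lborel) =
          (\<integral>t. ?h t * (2 * indicator P t - 1) + 2 * (?h t * indicator (U - P) t) \<partial>lborel)"
      by (rule Bochner_Integration.integral_cong) (use U(1) in \<open>auto simp: indicator_def\<close>)
    also have "\<dots> = (\<integral>t. ?h t * (2 * indicator P t - 1) \<partial>lborel) + 2 * (\<integral>t. ?h t * indicator (U - P) t \<partial>lborel)"
    proof -
      have i1: "integrable lborel (\<lambda>t. ?h t * (2 * indicator P t - 1))"
        by (rule integrable_rho_bounded[OF hi, where B=1]) (use Pb in \<open>auto simp: indicator_def\<close>)
      have i2: "integrable lborel (\<lambda>t. ?h t * indicator (U - P) t)"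
        by (rule integrable_real_mult_indicator) (use hi Ub Pb in auto)
      show ?thesis using i1 i2 by simp
    qed
    finally have eqU: "(\<integral>t. ?h t * (2 * indicator U t - 1) \<partial>lborel) =
       (\<integral>t. \<bar>?h t\<bar> \<partial>lborel) + 2 * (\<integral>t. ?h t * indicator (U - P) t \<partial>lborel)" using eq1 by simp
    have "- (\<integral>t. ?s t * indicator (U - P) t \<partial>lborel) \<le> (\<integral>t. ?h t * indicator (U - P) t \<partial>lborel)"
    proof -
      have "(\<integral>t. - (?s t * indicator (U - P) t) \<partial>lborel) \<le> (\<integral>t. ?h t * indicator (U - P) t \<partial>lborel)"
        by (rule integral_mono) (use integrable_real_mult_indicator[OF _ si, of "U - P"] integrable_real_mult_indicator[OF _ hi, of "U - P"] Ub Pb f(2) g(2) in \<open>auto simp: indicator_def\<close>)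
      then show ?thesis by simp
    qed
    then have "(\<integral>t. \<bar>?h t\<bar> \<partial>lborel) \<le> (\<integral>t. ?h t * (2 * indicator U t - 1) \<partial>lborel) + 2 * e"
      using eqU small by linarith
    also have "\<dots> \<le> Sup (TVset rf rg) + 2 * e"
      using TV_open[OF f g U(2)] by simp
    finally show ?thesis .
  qed
  show ?thesis
  proof (rule field_le_epsilon)
    fix e :: real assume "e > 0"
    then show "(\<integral>t. \<bar>?h t\<bar> \<partial>lborel) \<le> Sup (TVset rf rg) + e" using key[of "e/2"] by simp
  qed
qed

lemma power_integral_ennreal:
  assumes p: "p > 0" and c: "c \<ge> 0"
  shows "(\<integral>\<^sup>+s. ennreal (p * s powr (p - 1)) * indicator {0..c} s \<partial>lborel) = ennreal (c powr p)"
proof -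
  have "((\<lambda>s. s powr (p - 1)) has_integral (c powr (p - 1 + 1) / (p - 1 + 1))) {0..c}"
    by (rule has_integral_powr_from_0) (use p c in auto)
  then have "((\<lambda>s. p * s powr (p - 1)) has_integral (p * (c powr p / p))) {0..c}"
    by (intro has_integral_mult_right) simp
  then have "((\<lambda>s. p * s powr (p - 1)) has_integral c powr p) {0..c}" using p by simp
  then show ?thesis
    by (rule nn_integral_has_integral_lebesgue'[rotated]) (use p in auto)
qed

lemma layer_cake_bound:
  fixes h F :: "real \<Rightarrow> real"
  assumes hb: "h \<in> borel_measurable borel" and h0: "\<And>t. h t \<ge> 0" and p: "p > 0"
    and F: "\<And>s. s > 0 \<Longrightarrow> emeasure lborel {t. s \<le> h t} \<le> ennreal (F s)"
  shows "(\<integral>\<^sup>+t. ennreal (h t powr p) \<partial>lborel) \<le> (\<integral>\<^sup>+s. ennreal (p * s powr (p - 1)) * ennreal (F s) * indicator {0<..} s \<partial>lborel)"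
proof -
  define G where "G t s = ennreal (p * s powr (p - 1)) * indicator {0..h t} s" for t s :: real
  have Gm: "case_prod G \<in> borel_measurable (lborel \<Otimes>\<^sub>M lborel)"
  proof -
    note hb[measurable]
    have "case_prod G = (\<lambda>x. ennreal (p * snd x powr (p - 1)) * (if 0 \<le> snd x \<and> snd x \<le> h (fst x) then 1 else 0))"
      unfolding G_def by (auto simp: indicator_def fun_eq_iff)
    also have "\<dots> \<in> borel_measurable (lborel \<Otimes>\<^sub>M lborel)" by measurable
    finally show ?thesis .
  qed
  have "(\<integral>\<^sup>+t. ennreal (h t powr p) \<partial>lborel) = (\<integral>\<^sup>+t. (\<integral>\<^sup>+s. G t s \<partial>lborel) \<partial>lborel)"
    unfolding G_def by (intro nn_integral_cong) (simp add: power_integral_ennreal p h0)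
  also have "\<dots> = (\<integral>\<^sup>+s. (\<integral>\<^sup>+t. G t s \<partial>lborel) \<partial>lborel)"
    by (rule lborel_pair.Fubini'[symmetric, OF Gm])
  also have "\<dots> \<le> (\<integral>\<^sup>+s. ennreal (p * s powr (p - 1)) * ennreal (F s) * indicator {0<..} s \<partial>lborel)"
  proof (intro nn_integral_mono)
    fix s :: real
    have "(\<integral>\<^sup>+t. G t s \<partial>lborel) = (\<integral>\<^sup>+t. (ennreal (p * s powr (p - 1)) * indicator {0..} s) * indicator {t. s \<le> h t} t \<partial>lborel)"
      unfolding G_def by (intro nn_integral_cong) (auto simp: indicator_def)
    also have "\<dots> = ennreal (p * s powr (p - 1)) * indicator {0..} s * emeasure lborel {t. s \<le> h t}"
      by (rule nn_integral_cmult_indicator) (use hb in measurable)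
    also have "\<dots> \<le> ennreal (p * s powr (p - 1)) * ennreal (F s) * indicator {0<..} s"
    proof (cases "s > 0")
      case True
      then show ?thesis using F[OF True] by (auto simp: indicator_def intro: mult_left_mono)
    next
      case False then show ?thesis by (auto simp: indicator_def)
    qed
    finally show "(\<integral>\<^sup>+t. G t s \<partial>lborel) \<le> ennreal (p * s powr (p - 1)) * ennreal (F s) * indicator {0<..} s" .
  qed
  finally show ?thesis .
qed

lemma part1:
  assumes p: "p > 1" and a: "a \<ge> 0" and c: "c \<ge> 0"
  shows "(\<integral>\<^sup>+s. ennreal (c * s powr (p - 2)) * indicator {0..a} s \<partial>lborel) = ennreal (c * (a powr (p - 1) / (p - 1)))"
proof -
  have "((\<lambda>s. s powr (p - 2)) has_integral (a powr (p - 2 + 1) / (p - 2 + 1))) {0..a}"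
    by (rule has_integral_powr_from_0) (use p a in auto)
  then have "((\<lambda>s. c * s powr (p - 2)) has_integral (c * (a powr (p - 1) / (p - 1)))) {0..a}"
    by (intro has_integral_mult_right) (simp add: algebra_simps)
  then show ?thesis
    by (rule nn_integral_has_integral_lebesgue'[rotated]) (use c in auto)
qed

lemma part2:
  assumes p: "p < q" and a: "a > 0" and c: "c \<ge> 0"
  shows "(\<integral>\<^sup>+s. ennreal (c * s powr (p - 1 - q)) * indicator {a..} s \<partial>lborel) = ennreal (c * (a powr (p - q) / (q - p)))"
proof -
  have "((\<lambda>s. s powr (p - 1 - q)) has_integral -(a powr (p - 1 - q + 1)) / (p - 1 - q + 1)) {a..}"
    by (rule has_integral_powr_to_inf) (use p a in auto)
  moreover have "-(a powr (p - 1 - q + 1)) / (p - 1 - q + 1) = a powr (p - q) / (q - p)"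
    using p by (simp add: field_simps)
  ultimately have "((\<lambda>s. s powr (p - 1 - q)) has_integral (a powr (p - q) / (q - p))) {a..}" by simp
  then have "((\<lambda>s. c * s powr (p - 1 - q)) has_integral (c * (a powr (p - q) / (q - p)))) {a..}"
    by (rule has_integral_mult_right)
  then show ?thesis
    by (rule nn_integral_has_integral_lebesgue'[rotated]) (use c a in auto)
qed

lemma Lp_layer:
  fixes h :: "real \<Rightarrow> real"
  assumes hb: "h \<in> borel_measurable borel" and h0: "\<And>t. h t \<ge> 0" and p: "p > 1"
    and a: "a > 0" and T: "T \<ge> 0" and K: "K \<ge> 0"
    and lev1: "\<And>s. s > 0 \<Longrightarrow> emeasure lborel {t. s \<le> h t} \<le> ennreal (T / s)"
    and lev2: "\<And>s. s > a \<Longrightarrow> emeasure lborel {t. s \<le> h t} \<le> ennreal (K * s powr (- q))"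
    and pq: "p < q"
  shows "(\<integral>\<^sup>+t. ennreal (h t powr p) \<partial>lborel) \<le> ennreal (p * T * (a powr (p - 1) / (p - 1)) + p * K * (a powr (p - q) / (q - p)))"
proof -
  define F where "F s = (if s \<le> a then T / s else K * s powr (-q))" for s
  have "(\<integral>\<^sup>+t. ennreal (h t powr p) \<partial>lborel) \<le> (\<integral>\<^sup>+s. ennreal (p * s powr (p - 1)) * ennreal (F s) * indicator {0<..} s \<partial>lborel)"
    by (rule layer_cake_bound[OF hb h0]) (use p lev1 lev2 in \<open>auto simp: F_def\<close>)
  also have "\<dots> \<le> (\<integral>\<^sup>+s. ennreal (p * T * s powr (p - 2)) * indicator {0..a} s + ennreal (p * K * s powr (p - 1 - q)) * indicator {a..} s \<partial>lborel)"
  proof (intro nn_integral_mono)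
    fix s :: real
    show "ennreal (p * s powr (p - 1)) * ennreal (F s) * indicator {0<..} s
       \<le> ennreal (p * T * s powr (p - 2)) * indicator {0..a} s + ennreal (p * K * s powr (p - 1 - q)) * indicator {a..} s"
    proof (cases "s > 0")
      case False then show ?thesis by (simp add: indicator_def)
    next
      case s: True
      show ?thesis
      proof (cases "s \<le> a")
        case True
        have "p * s powr (p - 1) * (T / s) = p * T * s powr (p - 2)"
          using s by (simp add: powr_diff field_simps powr_add[symmetric] power2_eq_square)
        then show ?thesis using True s p T by (simp add: indicator_def F_def ennreal_mult[symmetric])
      next
        case False
        have e: "s powr (p - 1 - q) = s powr (p - 1) * s powr (-q)" by (simp add: powr_add[symmetric])
        have Fs: "F s = K * s powr (-q)" using False by (simp add: F_def)
        have "ennreal (p * s powr (p - 1)) * ennreal (F s) = ennreal (p * s powr (p - 1) * F s)"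
          by (rule ennreal_mult[symmetric]) (use p K Fs in auto)
        also have "p * s powr (p - 1) * F s = p * K * s powr (p - 1 - q)"
          unfolding Fs e by (simp add: algebra_simps)
        finally show ?thesis using False s by (simp add: indicator_def)
      qed
    qed
  qed
  also have "\<dots> = (\<integral>\<^sup>+s. ennreal (p * T * s powr (p - 2)) * indicator {0..a} s \<partial>lborel) + (\<integral>\<^sup>+s. ennreal (p * K * s powr (p - 1 - q)) * indicator {a..} s \<partial>lborel)"
    by (rule nn_integral_add) auto
  also have "\<dots> = ennreal (p * T * (a powr (p - 1) / (p - 1))) + ennreal (p * K * (a powr (p - q) / (q - p)))"
    using part1[OF p _, of a "p * T"] part2[OF pq a, of "p * K"] a p T K by simp
  also have "\<dots> = ennreal (p * T * (a powr (p - 1) / (p - 1)) + p * K * (a powr (p - q) / (q - p)))"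
    using a p T K pq by (intro ennreal_plus[symmetric]) auto
  finally show ?thesis .
qed

lemma lev2_from:
  fixes m s Kp :: real and d :: nat
  assumes d: "d > 1" and m: "m \<ge> 0" and s: "s > 0" and Kp: "Kp \<ge> 0"
    and ineq: "s * m \<le> Kp * m powr (1 / real d)"
  shows "m \<le> Kp powr (real d / (real d - 1)) * s powr (- (real d / (real d - 1)))"
proof (cases "m = 0")
  case True then show ?thesis by simp
next
  case False
  with m have m0: "m > 0" by simp
  let ?q = "real d / (real d - 1)"
  have q: "?q > 0" using d by simp
  have "m powr (1 - 1 / real d) * m powr (1 / real d) = m" using m0 by (simp add: powr_add[symmetric])
  then have "s * (m powr (1 - 1 / real d) * m powr (1 / real d)) \<le> Kp * m powr (1 / real d)" using ineq by simp
  then have "s * m powr (1 - 1 / real d) \<le> Kp" using m0 by (simp add: mult.assoc[symmetric])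
  then have a: "m powr (1 - 1 / real d) \<le> Kp / s" using s by (simp add: field_simps)
  have "m = (m powr (1 - 1 / real d)) powr ?q"
    using d m0 by (simp add: powr_powr field_simps)
  also have "\<dots> \<le> (Kp / s) powr ?q" by (rule powr_mono2) (use a q in auto)
  also have "\<dots> = Kp powr ?q * s powr (- ?q)"
    using s Kp by (simp add: powr_divide powr_minus_divide)
  finally show ?thesis .
qed

lemma lev2_from1:
  fixes m s Kp :: real
  assumes m: "m \<ge> 0" and s: "s > Kp" and ineq: "s * m \<le> Kp * m powr 1"
  shows "m = 0"
proof (rule ccontr)
  assume "m \<noteq> 0"
  with m have "m > 0" by simp
  then have "s * m > Kp * m" using s by simp
  then show False using ineq \<open>m > 0\<close> by simp
qed

lemma alg_a:
  fixes Kp T p :: real and d :: real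
  assumes Kp: "Kp > 0" and T: "T > 0"
  defines "a \<equiv> Kp powr d * T powr (- (d - 1))"
  shows "T * a powr (p - 1) = Kp powr (d * (p - 1)) * T powr (1 - (d - 1) * (p - 1))"
proof -
  have "a powr (p - 1) = Kp powr (d * (p - 1)) * T powr (- (d - 1) * (p - 1))"
    unfolding a_def using Kp T by (simp add: powr_mult powr_powr)
  then have "T * a powr (p - 1) = Kp powr (d * (p - 1)) * (T * T powr (- (d - 1) * (p - 1)))"
    by simp
  also have "T * T powr (- (d - 1) * (p - 1)) = T powr (1 + - (d - 1) * (p - 1))"
    using powr_mult_base[of T "- (d - 1) * (p - 1)"] T by (simp add: algebra_simps)
  also have "1 + - (d - 1) * (p - 1) = 1 - (d - 1) * (p - 1)" by (simp add: algebra_simps)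
  finally show ?thesis .
qed

lemma alg_b:
  fixes Kp T p :: real and d :: real
  assumes Kp: "Kp > 0" and T: "T > 0" and d: "d > 1"
  defines "a \<equiv> Kp powr d * T powr (- (d - 1))" and "q \<equiv> d / (d - 1)"
  shows "Kp powr q * a powr (p - q) = Kp powr (d * (p - 1)) * T powr (1 - (d - 1) * (p - 1))"
proof -
  have dq: "(d - 1) * q = d" unfolding q_def using d by simp
  have "a powr (p - q) = Kp powr (d * (p - q)) * T powr (- (d - 1) * (p - q))"
    unfolding a_def using Kp T by (simp add: powr_mult powr_powr)
  then have "Kp powr q * a powr (p - q) = (Kp powr q * Kp powr (d * (p - q))) * T powr (- (d - 1) * (p - q))"
    by simp
  also have "Kp powr q * Kp powr (d * (p - q)) = Kp powr (q + d * (p - q))" by (simp add: powr_add)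
  also have "q + d * (p - q) = d * (p - 1)" using dq by (simp add: algebra_simps)
  also have "- (d - 1) * (p - q) = 1 - (d - 1) * (p - 1)" using dq by (simp add: algebra_simps)
  finally show ?thesis .
qed

lemma Lp_core:
  fixes h :: "real \<Rightarrow> real" and d :: nat
  assumes hb: "h \<in> borel_measurable borel" and h0: "\<And>t. h t \<ge> 0" and d: "d \<ge> 1" and p: "p > 1"
    and pq: "d = 1 \<or> p < real d / (real d - 1)" and T: "T \<ge> 0" and Kp: "Kp \<ge> 0"
    and lev1: "\<And>s. s > 0 \<Longrightarrow> emeasure lborel {t. s \<le> h t} \<le> ennreal (T / s)"
    and levA: "\<And>s. s > 0 \<Longrightarrow> s * measure lborel {t. s \<le> h t} \<le> Kp * measure lborel {t. s \<le> h t} powr (1 / real d)"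
  shows "(\<integral>\<^sup>+t. ennreal (h t powr p) \<partial>lborel) \<le> ennreal ((p / (p - 1) + (if d = 1 then 0 else p / (real d / (real d - 1) - p)))
            * Kp powr (real d * (p - 1)) * T powr (1 - (real d - 1) * (p - 1)))"
proof -
  let ?X = "p / (p - 1) + (if d = 1 then 0 else p / (real d / (real d - 1) - p))"
  have emm: "emeasure lborel {t. s \<le> h t} = ennreal (measure lborel {t. s \<le> h t})" if s: "s > 0" for s
  proof (rule emeasure_eq_ennreal_measure)
    show "emeasure lborel {t. s \<le> h t} \<noteq> \<top>" using lev1[OF s] by (auto simp: top_unique)
  qed
  show ?thesis
  proof (cases "Kp = 0 \<or> T = 0")
    case True
    have z: "emeasure lborel {t. s \<le> h t} \<le> ennreal 0" if s: "s > 0" for s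
    proof (cases "T = 0")
      case True then show ?thesis using lev1[OF s] by simp
    next
      case False
      with \<open>Kp = 0 \<or> T = 0\<close> have "Kp = 0" by simp
      then have "s * measure lborel {t. s \<le> h t} \<le> 0" using levA[OF s] by simp
      then have "measure lborel {t. s \<le> h t} \<le> 0" using s by (simp add: mult_le_0_iff)
      then have "measure lborel {t. s \<le> h t} = 0" using measure_nonneg[of lborel "{t. s \<le> h t}"] by linarith
      then show ?thesis using emm[OF s] by simp
    qed
    have "(\<integral>\<^sup>+t. ennreal (h t powr p) \<partial>lborel) \<le> (\<integral>\<^sup>+s. ennreal (p * s powr (p - 1)) * ennreal 0 * indicator {0<..} s \<partial>lborel)"
      by (rule layer_cake_bound[OF hb h0, where F="\<lambda>_. 0"]) (use p z in auto)
    also have "\<dots> = 0" by simp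
    finally show ?thesis by simp
  next
    case False
    then have Kp0: "Kp > 0" and T0: "T > 0" using Kp T by auto
    show ?thesis
    proof (cases "d = 1")
      case True
      have "(\<integral>\<^sup>+t. ennreal (h t powr p) \<partial>lborel) \<le> ennreal (p * T * (Kp powr (p - 1) / (p - 1)) + p * 0 * (Kp powr (p - (p+1)) / ((p+1) - p)))"
      proof (rule Lp_layer[OF hb h0 p Kp0 T order.refl lev1])
        show "emeasure lborel {t. s \<le> h t} \<le> ennreal (0 * s powr - (p + 1))" if s: "Kp < s" for s
        proof -
          have s0: "s > 0" using s Kp by linarith
          have "measure lborel {t. s \<le> h t} = 0"
            by (rule lev2_from1[OF _ s]) (use levA[OF s0] True in auto)
          then show ?thesis using emm[OF s0] by simp
        qed
      qed simp_all
      also have "\<dots> = ennreal (?X * Kp powr (real d * (p - 1)) * T powr (1 - (real d - 1) * (p - 1)))"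
        using True T0 by (simp add: field_simps)
      finally show ?thesis .
    next
      case False
      then have d1: "d > 1" using d by simp
      have d1r: "real d > 1" using d1 by simp
      define q where "q = real d / (real d - 1)"
      define a where "a = Kp powr real d * T powr (- (real d - 1))"
      have a: "a > 0" unfolding a_def using Kp0 T0 by simp
      have pq': "p < q" using pq False unfolding q_def by simp
      have "(\<integral>\<^sup>+t. ennreal (h t powr p) \<partial>lborel) \<le> ennreal (p * T * (a powr (p - 1) / (p - 1)) + p * (Kp powr q) * (a powr (p - q) / (q - p)))"
      proof (rule Lp_layer[OF hb h0 p a T _ lev1 _ pq'])
        show "emeasure lborel {t. s \<le> h t} \<le> ennreal (Kp powr q * s powr - q)" if s: "a < s" for s
        proof -
          have s0: "s > 0" using s a by linarith
          have "measure lborel {t. s \<le> h t} \<le> Kp powr q * s powr - q"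
            unfolding q_def by (rule lev2_from[OF d1 _ s0 Kp levA[OF s0]]) simp
          then show ?thesis using emm[OF s0] by (simp add: ennreal_leI)
        qed
      qed simp
      also have "p * T * (a powr (p - 1) / (p - 1)) + p * (Kp powr q) * (a powr (p - q) / (q - p))
          = p / (p - 1) * (T * a powr (p - 1)) + p / (q - p) * (Kp powr q * a powr (p - q))"
        by (simp add: field_simps)
      also have "\<dots> = ?X * Kp powr (real d * (p - 1)) * T powr (1 - (real d - 1) * (p - 1))"
        unfolding a_def q_def alg_a[OF Kp0 T0] alg_b[OF Kp0 T0 d1r] using False by (simp add: algebra_simps)
      finally show ?thesis .
    qed
  qed
qed

lemma first_ineq_abstract:
  fixes rf rg :: "real \<Rightarrow> real" and d :: nat
  assumes f: "integrable lborel rf" "\<And>t. rf t \<ge> 0" and g: "integrable lborel rg" "\<And>t. rg t \<ge> 0"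
    and SBf: "SBd rf Kf d" and SBg: "SBd rg Kg d" and Kf: "Kf \<ge> 0" and Kg: "Kg \<ge> 0"
    and d: "d \<ge> 1" and p: "p > 1" and pq: "d = 1 \<or> p < real d / (real d - 1)"
  shows "integrable lborel (\<lambda>t. \<bar>rf t - rg t\<bar> powr p)"
    and "(\<integral>t. \<bar>rf t - rg t\<bar> powr p \<partial>lborel) \<le> (p / (p - 1) + (if d = 1 then 0 else p / (real d / (real d - 1) - p)))
            * (Kf + Kg) powr (real d * (p - 1)) * (\<integral>t. \<bar>rf t - rg t\<bar> \<partial>lborel) powr (1 - (real d - 1) * (p - 1))"
proof -
  let ?h = "\<lambda>t. \<bar>rf t - rg t\<bar>"
  let ?T = "\<integral>t. ?h t \<partial>lborel"
  let ?X = "p / (p - 1) + (if d = 1 then 0 else p / (real d / (real d - 1) - p))"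
  have hi: "integrable lborel ?h" using f g by simp
  have hb: "?h \<in> borel_measurable borel" using hi by auto
  have T: "?T \<ge> 0" by simp
  have lev1: "emeasure lborel {t. s \<le> ?h t} \<le> ennreal (?T / s)" if s: "s > 0" for s
  proof -
    have "emeasure lborel {t\<in>space lborel. ?h t \<ge> s} \<le> ennreal ((1/s) * ?T)"
      by (rule integral_Markov_inequality[OF hi _ s]) simp
    then show ?thesis by simp
  qed
  have levA: "s * measure lborel {t. s \<le> ?h t} \<le> (Kf + Kg) * measure lborel {t. s \<le> ?h t} powr (1 / real d)"
    if s: "s > 0" for s
  proof -
    define A where "A = {t. s \<le> ?h t}"
    have Ab: "A \<in> sets borel" unfolding A_def using hb by measurable
    have Af: "emeasure lborel A < \<infinity>" using lev1[OF s] unfolding A_def by (simp add: le_less_trans)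
    have "s * measure lborel A = (\<integral>t. s * indicator A t \<partial>lborel)"
      using Af Ab by (simp add: emeasure_eq_ennreal_measure less_top)
    also have "\<dots> \<le> (\<integral>t. rf t * indicator A t + rg t * indicator A t \<partial>lborel)"
    proof (rule integral_mono)
      show "integrable lborel (\<lambda>t. s * indicator A t)" using Af Ab by (simp add: integrable_indicator_iff)
      show "integrable lborel (\<lambda>t. rf t * indicator A t + rg t * indicator A t)"
        using f g Ab by (intro Bochner_Integration.integrable_add integrable_real_mult_indicator) auto
      show "s * indicator A t \<le> rf t * indicator A t + rg t * indicator A t" for t
        using f(2)[of t] g(2)[of t] by (auto simp: indicator_def A_def)
    qed
    also have "\<dots> = (\<integral>t. rf t * indicator A t \<partial>lborel) + (\<integral>t. rg t * indicator A t \<partial>lborel)"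
      using f g Ab by (intro Bochner_Integration.integral_add integrable_real_mult_indicator) auto
    also have "\<dots> \<le> Kf * (measure lborel A / 2) powr (1 / real d) + Kg * (measure lborel A / 2) powr (1 / real d)"
      by (intro add_mono SBd_borel[OF SBf Kf d f Ab Af] SBd_borel[OF SBg Kg d g Ab Af])
    also have "\<dots> \<le> (Kf + Kg) * measure lborel A powr (1 / real d)"
    proof -
      have "(measure lborel A / 2) powr (1 / real d) \<le> measure lborel A powr (1 / real d)"
        by (rule powr_mono2) auto
      then show ?thesis using Kf Kg by (simp add: distrib_right add_mono mult_left_mono)
    qed
    finally show ?thesis unfolding A_def .
  qed
  have core: "(\<integral>\<^sup>+t. ennreal (?h t powr p) \<partial>lborel) \<le> ennreal (?X * (Kf + Kg) powr (real d * (p - 1)) * ?T powr (1 - (real d - 1) * (p - 1)))"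
    by (rule Lp_core[OF hb _ d p pq T _ lev1 levA]) (use Kf Kg in auto)
  have mb: "(\<lambda>t. ?h t powr p) \<in> borel_measurable lborel" using hb by measurable
  show int: "integrable lborel (\<lambda>t. ?h t powr p)"
  proof (rule integrableI_nonneg[OF mb])
    show "AE t in lborel. 0 \<le> ?h t powr p" by simp
    show "(\<integral>\<^sup>+t. ennreal (?h t powr p) \<partial>lborel) < \<infinity>" using core by (simp add: le_less_trans)
  qed
  have X0: "?X \<ge> 0"
  proof (cases "d = 1")
    case False
    then have "p < real d / (real d - 1)" using pq by simp
    then show ?thesis using p False by simp
  qed (use p in simp)
  have R0: "0 \<le> ?X * (Kf + Kg) powr (real d * (p - 1)) * ?T powr (1 - (real d - 1) * (p - 1))"
    using X0 by simp
  have "ennreal (\<integral>t. ?h t powr p \<partial>lborel) = (\<integral>\<^sup>+t. ennreal (?h t powr p) \<partial>lborel)"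
    by (rule nn_integral_eq_integral[OF int, symmetric]) simp
  also note core
  finally show "(\<integral>t. ?h t powr p \<partial>lborel) \<le> ?X * (Kf + Kg) powr (real d * (p - 1)) * ?T powr (1 - (real d - 1) * (p - 1))"
    by (rule ennreal_le_iff[OF R0, THEN iffD1])
qed

lemma antideriv:
  fixes \<phi> :: "real \<Rightarrow> real"
  assumes c: "continuous_on UNIV \<phi>"
  shows "\<exists>F. \<forall>x. (F has_real_derivative \<phi> x) (at x)"
proof -
  define F where "F x = integral {0..x} \<phi> - integral {x..0} \<phi>" for x
  have "(F has_real_derivative \<phi> t) (at t)" for t
  proof -
    define a where "a = min t 0 - 1"
    define b where "b = max t 0 + 1"
    have ab: "a < t" "t < b" "a < 0" "0 < b" unfolding a_def b_def by auto
    have int: "\<phi> integrable_on {u..v}" for u v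
      by (rule integrable_continuous_interval, rule continuous_on_subset[OF c]) simp
    have eq: "integral {a..x} \<phi> - integral {a..0} \<phi> = F x" if x: "x \<in> {a<..<b}" for x
    proof (cases "x \<ge> 0")
      case True
      have "integral {a..0} \<phi> + integral {0..x} \<phi> = integral {a..x} \<phi>"
        by (rule Henstock_Kurzweil_Integration.integral_combine) (use ab True int in auto)
      moreover have "integral {x..0} \<phi> = 0"
      proof (cases "x = 0")
        case True then show ?thesis by simp
      next
        case False then have "{x..0} = {}" using \<open>x \<ge> 0\<close> by auto
        then show ?thesis by simp
      qed
      ultimately show ?thesis unfolding F_def by simp
    next
      case False
      have "integral {a..x} \<phi> + integral {x..0} \<phi> = integral {a..0} \<phi>"
        by (rule Henstock_Kurzweil_Integration.integral_combine) (use x False int in auto)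
      moreover have "{0..x} = {}" using False by auto
      ultimately show ?thesis unfolding F_def by simp
    qed
    have "((\<lambda>x. integral {a..x} \<phi>) has_real_derivative \<phi> t) (at t within {a..b})"
      by (rule integral_has_real_derivative) (use c ab in \<open>auto intro: continuous_on_subset\<close>)
    then have "((\<lambda>x. integral {a..x} \<phi>) has_real_derivative \<phi> t) (at t)"
      using at_within_Icc_at[OF ab(1,2)] by simp
    then have "((\<lambda>x. integral {a..x} \<phi> - integral {a..0} \<phi>) has_real_derivative \<phi> t) (at t)"
      using DERIV_diff[OF _ DERIV_const] by fastforce
    then show ?thesis
      by (rule has_field_derivative_transform_within_open[where S="{a<..<b}"]) (use ab eq in auto)
  qed
  then show ?thesis by blast
qed

lemma deriv_cont: "(\<And>x. (F has_real_derivative f x) (at x)) \<Longrightarrow> continuous_on UNIV F"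
  by (meson DERIV_isCont continuous_at_imp_continuous_on)

lemma lipschitz_deriv:
  fixes F :: "real \<Rightarrow> real"
  assumes D: "\<And>x. (F has_real_derivative f x) (at x)" and B: "\<And>x. \<bar>f x\<bar> \<le> B"
  shows "\<bar>F y - F x\<bar> \<le> B * \<bar>y - x\<bar>"
proof -
  have main: "\<bar>F v - F u\<bar> \<le> B * \<bar>v - u\<bar>" if "u < v" for u v
  proof -
    have "\<exists>z>u. z < v \<and> F v - F u = (v - u) * f z"
      by (rule MVT2[OF that]) (rule D)
    then obtain z where "F v - F u = (v - u) * f z" by blast
    then have "\<bar>F v - F u\<bar> = \<bar>v - u\<bar> * \<bar>f z\<bar>" by (simp add: abs_mult)
    also have "\<dots> \<le> \<bar>v - u\<bar> * B" by (intro mult_left_mono B) simp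
    finally show ?thesis by (simp add: mult.commute)
  qed
  show ?thesis
    by (cases x y rule: linorder_cases) (use main[of x y] main[of y x] in \<open>auto simp: abs_minus_commute\<close>)
qed

lemma Cb_inf_cont: "Cb_inf \<phi> \<Longrightarrow> continuous_on UNIV \<phi>"
  by (rule deriv_cont[of \<phi> "deriv \<phi>"]) (rule Cb_inf_deriv)

lemma shift_deriv:
  assumes "\<And>y. (G has_real_derivative g y) (at y)"
  shows "((\<lambda>s. G (x + s)) has_real_derivative g (x + s)) (at s)"
  using DERIV_chain2[OF assms[of "x+s"] DERIV_add[OF DERIV_const[of x] DERIV_ident]] by simp

lemma shift_deriv2:
  assumes "\<And>y. (G has_real_derivative g y) (at y)"
  shows "((\<lambda>y. G (y + c)) has_real_derivative g (x + c)) (at x)"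
  using DERIV_chain2[OF assms[of "x+c"] DERIV_add[OF DERIV_ident DERIV_const[of c]]] by simp

lemma smoothing:
  fixes \<phi> :: "real \<Rightarrow> real" and \<epsilon> :: real
  assumes phi: "Cb_inf \<phi>" "\<And>x. \<bar>\<phi> x\<bar> \<le> 1" and e: "\<epsilon> > 0"
  obtains \<phi>e \<Psi> where "Cb_inf \<phi>e" "\<And>x. \<bar>\<phi>e x\<bar> \<le> 1" "\<And>x. \<bar>deriv \<phi>e x\<bar> \<le> 2 / \<epsilon>"
    "Cb_inf \<Psi>" "\<And>x. \<bar>\<Psi> x\<bar> \<le> \<epsilon> / 2" "\<And>x. deriv \<Psi> x = \<phi> x - \<phi>e x"
proof -
  obtain F where F: "\<And>x. (F has_real_derivative \<phi> x) (at x)"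
    using antideriv[OF Cb_inf_cont[OF phi(1)]] by blast
  obtain G where G: "\<And>x. (G has_real_derivative F x) (at x)"
    using antideriv[OF deriv_cont[OF F]] by blast
  define \<phi>e where "\<phi>e x = (F (x + \<epsilon>) - F x) / \<epsilon>" for x
  define \<phi>e' where "\<phi>e' x = (\<phi> (x + \<epsilon>) - \<phi> x) / \<epsilon>" for x
  define \<Psi> where "\<Psi> x = F x - (G (x + \<epsilon>) - G x) / \<epsilon>" for x
  have dphie: "(\<phi>e has_real_derivative \<phi>e' x) (at x)" for x
    unfolding \<phi>e_def[abs_def] \<phi>e'_def
    by (rule DERIV_cdivide[OF DERIV_diff[OF shift_deriv2[OF F] F]])
  have dPsi: "(\<Psi> has_real_derivative \<phi> x - \<phi>e x) (at x)" for x
    unfolding \<Psi>_def[abs_def] \<phi>e_def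
    by (rule DERIV_diff[OF F DERIV_cdivide[OF DERIV_diff[OF shift_deriv2[OF G] G]]])
  have bphie: "\<bar>\<phi>e x\<bar> \<le> 1" for x
  proof -
    have "\<bar>F (x + \<epsilon>) - F x\<bar> \<le> 1 * \<bar>(x + \<epsilon>) - x\<bar>" by (rule lipschitz_deriv[OF F phi(2)])
    then show ?thesis unfolding \<phi>e_def using e by (simp add: abs_divide)
  qed
  have bPsi: "\<bar>\<Psi> x\<bar> \<le> \<epsilon> / 2" for x
  proof -
    define u where "u s = G (x + s) - G x - s * F x" for s
    have du: "(u has_real_derivative F (x + s) - F x) (at s)" for s
      unfolding u_def[abs_def]
      by (rule DERIV_cong[OF DERIV_diff[OF DERIV_diff[OF shift_deriv[OF G] DERIV_const] DERIV_cmult_right[OF DERIV_ident]]]) simp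
    have lip: "\<bar>F (x + s) - F x\<bar> \<le> \<bar>s\<bar>" for s using lipschitz_deriv[OF F phi(2), of "x + s" x] by simp
    have cu: "continuous_on {0..\<epsilon>} u" using du by (meson DERIV_isCont continuous_at_imp_continuous_on)
    have up: "u \<epsilon> \<le> \<epsilon>\<^sup>2 / 2"
    proof -
      have "(\<lambda>s. s\<^sup>2 / 2 - u s) 0 \<le> (\<lambda>s. s\<^sup>2 / 2 - u s) \<epsilon>"
      proof (rule DERIV_nonneg_imp_increasing_open[where f="\<lambda>s. s\<^sup>2 / 2 - u s"])
        show "\<exists>y. ((\<lambda>s. s\<^sup>2 / 2 - u s) has_real_derivative y) (at s) \<and> 0 \<le> y" if "0 < s" "s < \<epsilon>" for s
          using lip[of s] that
          by (intro exI[of _ "s - (F (x + s) - F x)"] conjI DERIV_diff du)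
             (auto intro!: derivative_eq_intros simp: abs_le_iff)
        show "continuous_on {0..\<epsilon>} (\<lambda>s. s\<^sup>2 / 2 - u s)" by (intro continuous_intros cu) auto
      qed (use e in simp)
      then show ?thesis by (simp add: u_def)
    qed
    have lo: "- (\<epsilon>\<^sup>2 / 2) \<le> u \<epsilon>"
    proof -
      have "(\<lambda>s. s\<^sup>2 / 2 + u s) 0 \<le> (\<lambda>s. s\<^sup>2 / 2 + u s) \<epsilon>"
      proof (rule DERIV_nonneg_imp_increasing_open[where f="\<lambda>s. s\<^sup>2 / 2 + u s"])
        show "\<exists>y. ((\<lambda>s. s\<^sup>2 / 2 + u s) has_real_derivative y) (at s) \<and> 0 \<le> y" if "0 < s" "s < \<epsilon>" for s
          using lip[of s] that
          by (intro exI[of _ "s + (F (x + s) - F x)"] conjI DERIV_add du)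
             (auto intro!: derivative_eq_intros simp: abs_le_iff)
        show "continuous_on {0..\<epsilon>} (\<lambda>s. s\<^sup>2 / 2 + u s)" by (intro continuous_intros cu) auto
      qed (use e in simp)
      then show ?thesis by (simp add: u_def)
    qed
    have "\<Psi> x = - (u \<epsilon> / \<epsilon>)" unfolding \<Psi>_def u_def using e by (simp add: field_simps)
    then have "\<bar>\<Psi> x\<bar> = \<bar>u \<epsilon>\<bar> / \<epsilon>" using e by simp
    also have "\<dots> \<le> (\<epsilon>\<^sup>2 / 2) / \<epsilon>" using up lo e by (intro divide_right_mono) auto
    also have "\<dots> = \<epsilon> / 2" using e by (simp add: power2_eq_square)
    finally show ?thesis .
  qed
  have smk_phie': "smk k \<phi>e'" for k
  proof -
    have eq: "\<phi>e' = (\<lambda>x. (1/\<epsilon>) * \<phi> (1 * x + \<epsilon>) + (-1/\<epsilon>) * \<phi> x)"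
      unfolding \<phi>e'_def by (auto simp: fun_eq_iff diff_divide_distrib)
    have "smk k \<phi>" using phi(1) unfolding Cb_inf_smk by blast
    then show ?thesis unfolding eq by (intro smk_add smk_cmult smk_affine)
  qed
  have smk_phie: "smk k \<phi>e" for k
  proof -
    have "smk (Suc k) \<phi>e"
      by (rule smk_SucI[OF dphie _ smk_phie']) (use bphie in \<open>auto simp: bounded_range_iff\<close>)
    then show ?thesis by (rule smk_mono)
  qed
  have C1: "Cb_inf \<phi>e" unfolding Cb_inf_smk using smk_phie by blast
  have C2: "Cb_inf \<Psi>"
    unfolding Cb_inf_smk
  proof
    fix k
    have "smk k (\<lambda>x. \<phi> x + (-1) * \<phi>e x)"
      using phi(1) smk_phie unfolding Cb_inf_smk by (intro smk_add smk_cmult) auto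
    moreover have "bounded (range \<Psi>)" unfolding bounded_range_iff using bPsi by blast
    ultimately have "smk (Suc k) \<Psi>"
      by (intro smk_SucI[OF dPsi]) simp_all
    then show "smk k \<Psi>" by (rule smk_mono)
  qed
  have dd1: "deriv \<phi>e = \<phi>e'" by (rule deriv_eqI[OF dphie])
  have dd2: "deriv \<Psi> = (\<lambda>x. \<phi> x - \<phi>e x)" by (rule deriv_eqI[OF dPsi])
  have b3: "\<bar>deriv \<phi>e x\<bar> \<le> 2 / \<epsilon>" for x
  proof -
    have "\<bar>\<phi> (x + \<epsilon>) - \<phi> x\<bar> \<le> 2" using phi(2)[of "x+\<epsilon>"] phi(2)[of x] by (simp add: abs_le_iff)
    then show ?thesis unfolding dd1 \<phi>e'_def using e by (simp add: abs_divide divide_right_mono)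
  qed
  show ?thesis by (rule that[OF C1 bphie b3 C2 bPsi]) (simp add: dd2)
qed

definition FMset :: "(real \<Rightarrow> real) \<Rightarrow> (real \<Rightarrow> real) \<Rightarrow> real set" where
  "FMset rf rg = {(\<integral>x. \<phi> x \<partial>density lborel (\<lambda>t. ennreal (rf t))) - (\<integral>x. \<phi> x \<partial>density lborel (\<lambda>t. ennreal (rg t))) | \<phi>.
      Cb_inf \<phi> \<and> (\<forall>x. \<bar>\<phi> x\<bar> \<le> 1) \<and> (\<forall>x. \<bar>deriv \<phi> x\<bar> \<le> 1)}"

lemma FM_dist_eq: "FM_dist (density lborel (\<lambda>t. ennreal (rf t))) (density lborel (\<lambda>t. ennreal (rg t))) = Sup (FMset rf rg)"
  unfolding FM_dist_def FMset_def ..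

lemma FMset_sub: "FMset rf rg \<subseteq> TVset rf rg"
  unfolding FMset_def TVset_def by blast

lemma FM_elem:
  assumes f: "integrable lborel rf" "\<And>t. rf t \<ge> 0" and g: "integrable lborel rg" "\<And>t. rg t \<ge> 0"
    and phi: "Cb_inf \<phi>" "\<And>x. \<bar>\<phi> x\<bar> \<le> 1" "\<And>x. \<bar>deriv \<phi> x\<bar> \<le> 1"
  shows "(\<integral>t. (rf t - rg t) * \<phi> t \<partial>lborel) \<in> FMset rf rg"
proof -
  obtain \<psi> where "(\<integral>t. (rf t - rg t) * \<phi> t \<partial>lborel) = (\<integral>x. \<psi> x \<partial>density lborel (\<lambda>t. ennreal (rf t))) - (\<integral>x. \<psi> x \<partial>density lborel (\<lambda>t. ennreal (rg t)))"
    "\<psi> = \<phi>"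
  proof -
    have "(\<integral>t. (rf t - rg t) * \<phi> t \<partial>lborel) \<in> TVset rf rg" by (rule TV_elem[OF f g phi(1,2)])
    have pb: "\<phi> \<in> borel_measurable borel" by (rule Cb_inf_borel[OF phi(1)])
    have "(\<integral>t. (rf t - rg t) * \<phi> t \<partial>lborel) = (\<integral>t. rf t * \<phi> t \<partial>lborel) - (\<integral>t. rg t * \<phi> t \<partial>lborel)"
      unfolding left_diff_distrib
      by (rule Bochner_Integration.integral_diff) (use integrable_rho_bounded[OF f(1) pb phi(2)] integrable_rho_bounded[OF g(1) pb phi(2)] in auto)
    also have "\<dots> = (\<integral>x. \<phi> x \<partial>density lborel (\<lambda>t. ennreal (rf t))) - (\<integral>x. \<phi> x \<partial>density lborel (\<lambda>t. ennreal (rg t)))"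
      using density_integral[OF f pb] density_integral[OF g pb] by simp
    finally show ?thesis using that by blast
  qed
  then show ?thesis unfolding FMset_def using phi by blast
qed

lemma FMset_bdd:
  assumes f: "integrable lborel rf" "\<And>t. rf t \<ge> 0" and g: "integrable lborel rg" "\<And>t. rg t \<ge> 0"
  shows "bdd_above (FMset rf rg)" and "0 \<in> FMset rf rg"
proof -
  show "bdd_above (FMset rf rg)"
    by (rule bdd_above_mono[OF TVset_bdd(1)[OF f g] FMset_sub])
  have "(\<integral>t. (rf t - rg t) * 0 \<partial>lborel) \<in> FMset rf rg"
  proof (rule FM_elem[OF f g])
    show "Cb_inf (\<lambda>x. 0::real)" by (auto simp: Cb_inf_smk intro: smk_const)
    show "\<bar>deriv (\<lambda>x. 0::real) x\<bar> \<le> 1" for x by simp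
  qed auto
  then show "0 \<in> FMset rf rg" by simp
qed

lemma powr_alg: "(e::real) > 0 \<Longrightarrow> d \<ge> 1 \<Longrightarrow> (e/2) * (2 / (e/2)) powr (1 - 1/real d) = 2 powr (1 - 2/real d) * e powr (1/real d)"
proof -
  assume e: "e > 0" and d: "d \<ge> 1"
  define \<beta> where "\<beta> = 1 - 1/real d"
  have a1: "2 / (e/2) = 4 / e" by simp
  have a2: "(4 / e) powr \<beta> = 4 powr \<beta> / e powr \<beta>" using e by (simp add: powr_divide)
  have a3: "(4::real) powr \<beta> = 2 powr (2 * \<beta>)"
  proof -
    have "(2::real) powr (2 * \<beta>) = (2 powr 2) powr \<beta>" by (simp only: powr_powr)
    also have "(2::real) powr 2 = 4" by simp
    finally show ?thesis by simp
  qed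
  have a4: "e / e powr \<beta> = e powr (1 - \<beta>)" using e by (simp add: powr_diff)
  have a5: "(2::real) powr (2 * \<beta>) / 2 = 2 powr (2 * \<beta> - 1)" by (simp add: powr_diff)
  have "(e/2) * (2 / (e/2)) powr \<beta> = (e / e powr \<beta>) * (2 powr (2 * \<beta>) / 2)"
    unfolding a1 a2 a3 by simp
  also have "\<dots> = e powr (1 - \<beta>) * 2 powr (2 * \<beta> - 1)" unfolding a4 a5 ..
  also have "1 - \<beta> = 1 / real d" unfolding \<beta>_def by simp
  also have "2 * \<beta> - 1 = 1 - 2 / real d" unfolding \<beta>_def by simp
  finally show ?thesis unfolding \<beta>_def by simp
qed

lemma T_phi_bound:
  assumes f: "integrable lborel rf" "\<And>t. rf t \<ge> 0" and g: "integrable lborel rg" "\<And>t. rg t \<ge> 0"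
    and SBf: "SBd rf Kf d" and SBg: "SBd rg Kg d" and Kf: "Kf \<ge> 0" and Kg: "Kg \<ge> 0" and d: "d \<ge> 1"
    and phi: "Cb_inf \<phi>" "\<And>x. \<bar>\<phi> x\<bar> \<le> 1" and e: "\<epsilon> > 0" "\<epsilon> \<le> 2"
  shows "(\<integral>t. (rf t - rg t) * \<phi> t \<partial>lborel) \<le> (2 / \<epsilon>) * Sup (FMset rf rg) + (Kf + Kg) * (2 powr (1 - 2/real d) * \<epsilon> powr (1/real d))"
proof -
  obtain \<phi>e \<Psi> where pe: "Cb_inf \<phi>e" "\<And>x. \<bar>\<phi>e x\<bar> \<le> 1" "\<And>x. \<bar>deriv \<phi>e x\<bar> \<le> 2 / \<epsilon>"
    and Ps: "Cb_inf \<Psi>" "\<And>x. \<bar>\<Psi> x\<bar> \<le> \<epsilon> / 2" "\<And>x. deriv \<Psi> x = \<phi> x - \<phi>e x"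
    using smoothing[OF phi e(1)] by blast
  let ?h = "\<lambda>t. rf t - rg t"
  have hi: "integrable lborel ?h" using f g by simp
  have pb: "\<phi> \<in> borel_measurable borel" and peb: "\<phi>e \<in> borel_measurable borel"
    using Cb_inf_borel phi(1) pe(1) by auto
  have dPs: "deriv \<Psi> = (\<lambda>x. \<phi> x - \<phi>e x)" using Ps(3) by auto
  have dPb: "\<bar>deriv \<Psi> x\<bar> \<le> 2" for x using phi(2)[of x] pe(2)[of x] unfolding dPs by (simp add: abs_le_iff)
  have i1: "integrable lborel (\<lambda>t. ?h t * \<phi>e t)" by (rule integrable_rho_bounded[OF hi peb pe(2)])
  have dPsb: "deriv \<Psi> \<in> borel_measurable borel" unfolding dPs using pb peb by auto
  have split: "(\<integral>t. ?h t * \<phi> t \<partial>lborel) = (\<integral>t. ?h t * \<phi>e t \<partial>lborel) + (\<integral>t. ?h t * deriv \<Psi> t \<partial>lborel)"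
  proof -
    have i2: "integrable lborel (\<lambda>t. ?h t * deriv \<Psi> t)" by (rule integrable_rho_bounded[OF hi dPsb dPb])
    have "(\<integral>t. ?h t * \<phi> t \<partial>lborel) = (\<integral>t. ?h t * \<phi>e t + ?h t * deriv \<Psi> t \<partial>lborel)"
      unfolding dPs by (simp add: algebra_simps)
    also have "\<dots> = (\<integral>t. ?h t * \<phi>e t \<partial>lborel) + (\<integral>t. ?h t * deriv \<Psi> t \<partial>lborel)"
      by (rule Bochner_Integration.integral_add[OF i1 i2])
    finally show ?thesis .
  qed
  have part1: "(\<integral>t. ?h t * \<phi>e t \<partial>lborel) \<le> (2 / \<epsilon>) * Sup (FMset rf rg)"
  proof -
    let ?\<eta> = "\<lambda>x. (\<epsilon>/2) * \<phi>e x"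
    have Ce: "Cb_inf ?\<eta>" by (rule Cb_inf_cmult[OF pe(1)])
    have de: "deriv ?\<eta> = (\<lambda>x. (\<epsilon>/2) * deriv \<phi>e x)"
      by (rule deriv_eqI) (rule DERIV_cmult[OF Cb_inf_deriv[OF pe(1)]])
    have "(\<integral>t. ?h t * ?\<eta> t \<partial>lborel) \<in> FMset rf rg"
    proof (rule FM_elem[OF f g Ce])
      show "\<bar>?\<eta> x\<bar> \<le> 1" for x
      proof -
        have "\<bar>?\<eta> x\<bar> = (\<epsilon>/2) * \<bar>\<phi>e x\<bar>" using e by (simp add: abs_mult)
        also have "\<dots> \<le> (\<epsilon>/2) * 1" using pe(2)[of x] e by (intro mult_left_mono) auto
        finally show ?thesis using e by simp
      qed
      show "\<bar>deriv ?\<eta> x\<bar> \<le> 1" for x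
      proof -
        have "\<bar>deriv ?\<eta> x\<bar> = (\<epsilon>/2) * \<bar>deriv \<phi>e x\<bar>" unfolding de using e by (simp add: abs_mult)
        also have "\<dots> \<le> (\<epsilon>/2) * (2 / \<epsilon>)" using pe(3)[of x] e by (intro mult_left_mono) auto
        finally show ?thesis using e by simp
      qed
    qed
    then have "(\<integral>t. ?h t * ?\<eta> t \<partial>lborel) \<le> Sup (FMset rf rg)"
      by (rule cSup_upper[OF _ FMset_bdd(1)[OF f g]])
    moreover have "(\<integral>t. ?h t * ?\<eta> t \<partial>lborel) = (\<epsilon>/2) * (\<integral>t. ?h t * \<phi>e t \<partial>lborel)"
      by (simp add: mult.left_commute)
    ultimately have "(\<epsilon>/2) * (\<integral>t. ?h t * \<phi>e t \<partial>lborel) \<le> Sup (FMset rf rg)" by simp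
    then show ?thesis using e by (simp add: field_simps)
  qed
  have L: "\<epsilon> / 2 > 0" using e by simp
  have part2f: "(\<integral>t. rf t * deriv \<Psi> t \<partial>lborel) \<le> Kf * (\<epsilon>/2) * (2 / (\<epsilon>/2)) powr (1 - 1/real d)"
    by (rule SBd_scaled[OF SBf Kf d Ps(1) L Ps(2) dPb])
  have part2g: "(\<integral>t. rg t * deriv (\<lambda>x. -1 * \<Psi> x) t \<partial>lborel) \<le> Kg * (\<epsilon>/2) * (2 / (\<epsilon>/2)) powr (1 - 1/real d)"
  proof (rule SBd_scaled[OF SBg Kg d Cb_inf_cmult[OF Ps(1)] L])
    show "\<bar>-1 * \<Psi> x\<bar> \<le> \<epsilon> / 2" for x using Ps(2)[of x] by simp
    have "deriv (\<lambda>x. -1 * \<Psi> x) = (\<lambda>x. -1 * deriv \<Psi> x)"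
      by (rule deriv_eqI) (rule DERIV_cmult[OF Cb_inf_deriv[OF Ps(1)]])
    then show "\<bar>deriv (\<lambda>x. -1 * \<Psi> x) x\<bar> \<le> 2" for x using dPb[of x] by simp
  qed
  have dm: "deriv (\<lambda>x. -1 * \<Psi> x) = (\<lambda>x. -1 * deriv \<Psi> x)"
    by (rule deriv_eqI) (rule DERIV_cmult[OF Cb_inf_deriv[OF Ps(1)]])
  have "(\<integral>t. ?h t * deriv \<Psi> t \<partial>lborel) = (\<integral>t. rf t * deriv \<Psi> t \<partial>lborel) + (\<integral>t. rg t * deriv (\<lambda>x. -1 * \<Psi> x) t \<partial>lborel)"
  proof -
    have j1: "integrable lborel (\<lambda>t. rf t * deriv \<Psi> t)" by (rule integrable_rho_bounded[OF f(1) dPsb dPb])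
    have j2: "integrable lborel (\<lambda>t. rg t * deriv \<Psi> t)" by (rule integrable_rho_bounded[OF g(1) dPsb dPb])
    have "(\<integral>t. ?h t * deriv \<Psi> t \<partial>lborel) = (\<integral>t. rf t * deriv \<Psi> t - rg t * deriv \<Psi> t \<partial>lborel)"
      by (simp add: algebra_simps)
    also have "\<dots> = (\<integral>t. rf t * deriv \<Psi> t \<partial>lborel) - (\<integral>t. rg t * deriv \<Psi> t \<partial>lborel)"
      by (rule Bochner_Integration.integral_diff[OF j1 j2])
    finally show ?thesis unfolding dm by simp
  qed
  also have "\<dots> \<le> Kf * (\<epsilon>/2) * (2 / (\<epsilon>/2)) powr (1 - 1/real d) + Kg * (\<epsilon>/2) * (2 / (\<epsilon>/2)) powr (1 - 1/real d)"
    by (rule add_mono[OF part2f part2g])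
  also have "\<dots> = (Kf + Kg) * (2 powr (1 - 2/real d) * \<epsilon> powr (1/real d))"
    using powr_alg[OF e(1) d] by (simp add: algebra_simps)
  finally have part2: "(\<integral>t. ?h t * deriv \<Psi> t \<partial>lborel) \<le> (Kf + Kg) * (2 powr (1 - 2/real d) * \<epsilon> powr (1/real d))" .
  show ?thesis unfolding split using part1 part2 by linarith
qed

lemma abs_powr_int:
  assumes a: "a > 0"
  shows "((\<lambda>t::real. \<bar>t\<bar> powr a) has_integral (2 / (a + 1))) {-1..1}"
proof -
  have r: "((\<lambda>t. t powr a) has_integral (1 powr (a+1) / (a+1))) {0..1}"
    by (rule has_integral_powr_from_0) (use a in auto)
  then have r': "((\<lambda>t. t powr a) has_integral (1 / (a+1))) {0..1}" by simp
  have r1: "((\<lambda>t::real. \<bar>t\<bar> powr a) has_integral (1 / (a+1))) {0..1}"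
    by (rule has_integral_eq[OF _ r']) auto
  have "((\<lambda>t::real. \<bar>-t\<bar> powr a) has_integral (1 / (a+1))) {-1..-0}"
    using r1 by (subst has_integral_reflect_real) simp
  then have r2: "((\<lambda>t::real. \<bar>t\<bar> powr a) has_integral (1 / (a+1))) {-1..0}" by simp
  have "((\<lambda>t::real. \<bar>t\<bar> powr a) has_integral (1 / (a+1) + 1 / (a+1))) {-1..1}"
    by (rule has_integral_combine[OF _ _ r2 r1]) auto
  then show ?thesis by (simp add: field_simps)
qed

lemma gauss_lower:
  fixes a :: real
  assumes a: "0 < a" "a \<le> 1"
  shows "integrable lborel (\<lambda>t. std_normal_density t * \<bar>t\<bar> powr a)"
    and "(\<integral>t. std_normal_density t * \<bar>t\<bar> powr a \<partial>lborel) \<ge> 1 - (2 / sqrt (2 * pi)) * (1 - 1 / (1 + a))"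
proof -
  have b1: "\<bar>t\<bar> powr a \<le> 1 + \<bar>t\<bar>" for t :: real
  proof (cases "\<bar>t\<bar> \<le> 1")
    case True
    then have "\<bar>t\<bar> powr a \<le> 1 powr a" by (intro powr_mono2) (use a in auto)
    then show ?thesis by simp
  next
    case False
    then have "\<bar>t\<bar> powr a \<le> \<bar>t\<bar> powr 1" by (intro powr_mono) (use a in auto)
    then show ?thesis using False by simp
  qed
  show int: "integrable lborel (\<lambda>t. std_normal_density t * \<bar>t\<bar> powr a)"
  proof (rule Bochner_Integration.integrable_bound[of lborel "\<lambda>t. std_normal_density t + std_normal_density t * \<bar>t\<bar>^1"])
    show "integrable lborel (\<lambda>t. std_normal_density t + std_normal_density t * \<bar>t\<bar>^1)"
      by (intro Bochner_Integration.integrable_add integrable_std_normal_moment_abs integrable_normal_density) auto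
    show "AE t in lborel. norm (std_normal_density t * \<bar>t\<bar> powr a) \<le> norm (std_normal_density t + std_normal_density t * \<bar>t\<bar>^1)"
    proof (rule AE_I2)
      fix t :: real
      have "std_normal_density t * \<bar>t\<bar> powr a \<le> std_normal_density t * (1 + \<bar>t\<bar>)"
        by (intro mult_left_mono b1) simp
      then show "norm (std_normal_density t * \<bar>t\<bar> powr a) \<le> norm (std_normal_density t + std_normal_density t * \<bar>t\<bar>^1)"
        by (simp add: abs_mult distrib_left)
    qed
  qed simp_all
  let ?c = "1 / sqrt (2 * pi)"
  have c0: "?c > 0" by simp
  have sle: "std_normal_density t \<le> ?c" for t
    unfolding std_normal_density_def by (simp add: divide_le_eq)
  have ind_int: "((\<lambda>t::real. 1 - \<bar>t\<bar> powr a) has_integral (2 - 2 / (a + 1))) {-1..1}"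
  proof -
    have "((\<lambda>t::real. 1::real) has_integral (Henstock_Kurzweil_Integration.content {-1..1::real} *\<^sub>R 1)) {-1..1}" by (rule has_integral_const_real)
    then have "((\<lambda>t::real. 1::real) has_integral 2) {-1..1}" by simp
    from has_integral_diff[OF this abs_powr_int[OF a(1)]] show ?thesis .
  qed
  have nn1: "(\<integral>\<^sup>+t. ennreal (1 - \<bar>t\<bar> powr a) * indicator {-1..1} t \<partial>lborel) = ennreal (2 - 2 / (a + 1))"
  proof (rule nn_integral_has_integral_lebesgue'[OF _ ind_int])
    fix t :: real assume "t \<in> {-1..1}"
    then have "\<bar>t\<bar> powr a \<le> 1 powr a" by (intro powr_mono2) (use a in auto)
    then show "0 \<le> 1 - \<bar>t\<bar> powr a" by simp
  qed
  have int2: "integrable lborel (\<lambda>t. (1 - \<bar>t\<bar> powr a) * indicator {-1..1} t)"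
  proof (rule Bochner_Integration.integrable_bound[of lborel "\<lambda>t. indicator {-1..1::real} t :: real"])
    show "integrable lborel (\<lambda>t. indicator {-1..1::real} t :: real)"
      by (simp add: integrable_indicator_iff)
    show "AE t in lborel. norm ((1 - \<bar>t\<bar> powr a) * indicator {-1..1} t) \<le> norm (indicator {-1..1::real} t :: real)"
    proof (rule AE_I2)
      fix t :: real
      show "norm ((1 - \<bar>t\<bar> powr a) * indicator {-1..1} t) \<le> norm (indicator {-1..1::real} t :: real)"
      proof (cases "t \<in> {-1..1}")
        case True
        then have "\<bar>t\<bar> powr a \<le> 1 powr a" by (intro powr_mono2) (use a in auto)
        then show ?thesis using True by (simp add: indicator_def)
      qed (auto simp: indicator_def)
    qed
  qed simp
  have I2: "(\<integral>t. (1 - \<bar>t\<bar> powr a) * indicator {-1..1} t \<partial>lborel) = 2 - 2 / (a + 1)"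
  proof -
    have "ennreal (\<integral>t. (1 - \<bar>t\<bar> powr a) * indicator {-1..1} t \<partial>lborel) = (\<integral>\<^sup>+t. ennreal ((1 - \<bar>t\<bar> powr a) * indicator {-1..1} t) \<partial>lborel)"
    proof (rule nn_integral_eq_integral[OF int2, symmetric], rule AE_I2)
      fix t :: real
      show "0 \<le> (1 - \<bar>t\<bar> powr a) * indicator {-1..1} t"
      proof (cases "t \<in> {-1..1}")
        case True
        then have "\<bar>t\<bar> powr a \<le> 1 powr a" by (intro powr_mono2) (use a in auto)
        then show ?thesis using True by (simp add: indicator_def)
      qed (auto simp: indicator_def)
    qed
    also have "\<dots> = (\<integral>\<^sup>+t. ennreal (1 - \<bar>t\<bar> powr a) * indicator {-1..1} t \<partial>lborel)"
      by (intro nn_integral_cong) (simp add: indicator_def)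
    also note nn1
    finally have "ennreal (\<integral>t. (1 - \<bar>t\<bar> powr a) * indicator {-1..1} t \<partial>lborel) = ennreal (2 - 2 / (a + 1))" .
    moreover have "0 \<le> 2 - 2 / (a + 1)" using a by (simp add: field_simps)
    moreover have "0 \<le> (\<integral>t. (1 - \<bar>t\<bar> powr a) * indicator {-1..1} t \<partial>lborel)"
    proof (rule integral_nonneg_AE, rule AE_I2)
      fix t :: real
      show "0 \<le> (1 - \<bar>t\<bar> powr a) * indicator {-1..1} t"
      proof (cases "t \<in> {-1..1}")
        case True
        then have "\<bar>t\<bar> powr a \<le> 1 powr a" by (intro powr_mono2) (use a in auto)
        then show ?thesis using True by (simp add: indicator_def)
      qed (auto simp: indicator_def)
    qed
    ultimately show ?thesis by simp
  qed
  have pw: "std_normal_density t \<le> std_normal_density t * \<bar>t\<bar> powr a + ?c * ((1 - \<bar>t\<bar> powr a) * indicator {-1..1} t)" for t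
  proof (cases "t \<in> {-1..1}")
    case True
    then have le1: "\<bar>t\<bar> powr a \<le> 1 powr a" by (intro powr_mono2) (use a in auto)
    have "std_normal_density t * (1 - \<bar>t\<bar> powr a) \<le> ?c * (1 - \<bar>t\<bar> powr a)"
      by (intro mult_right_mono sle) (use le1 in simp)
    then show ?thesis using True by (simp add: indicator_def algebra_simps)
  next
    case False
    then have "\<bar>t\<bar> \<ge> 1" by auto
    then have "1 powr a \<le> \<bar>t\<bar> powr a" by (intro powr_mono2) (use a in auto)
    then have "std_normal_density t * 1 \<le> std_normal_density t * \<bar>t\<bar> powr a"
      by (intro mult_left_mono) auto
    moreover have "indicator {-1..1} t = (0::real)" using False by simp
    ultimately show ?thesis by simp
  qed
  have "1 = (\<integral>t. std_normal_density t \<partial>lborel)" by simp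
  also have "\<dots> \<le> (\<integral>t. std_normal_density t * \<bar>t\<bar> powr a + ?c * ((1 - \<bar>t\<bar> powr a) * indicator {-1..1} t) \<partial>lborel)"
  proof (rule integral_mono[OF _ _ pw])
    show "integrable lborel std_normal_density" using integrable_normal_density[of 0 1] by simp
    show "integrable lborel (\<lambda>t. std_normal_density t * \<bar>t\<bar> powr a + ?c * ((1 - \<bar>t\<bar> powr a) * indicator {-1..1} t))"
      by (intro Bochner_Integration.integrable_add int Bochner_Integration.integrable_mult_right int2)
  qed
  also have "\<dots> = (\<integral>t. std_normal_density t * \<bar>t\<bar> powr a \<partial>lborel) + ?c * (2 - 2 / (a + 1))"
    using int int2 I2 by simp
  finally have "1 \<le> (\<integral>t. std_normal_density t * \<bar>t\<bar> powr a \<partial>lborel) + ?c * (2 - 2 / (a + 1))" .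
  moreover have "?c * (2 - 2 / (a + 1)) = (2 / sqrt (2 * pi)) * (1 - 1 / (1 + a))"
    by (simp add: field_simps)
  ultimately show "(\<integral>t. std_normal_density t * \<bar>t\<bar> powr a \<partial>lborel) \<ge> 1 - (2 / sqrt (2 * pi)) * (1 - 1 / (1 + a))"
    by linarith
qed

lemma TVset_rep:
  assumes f: "integrable lborel rf" "\<And>t. rf t \<ge> 0" and g: "integrable lborel rg" "\<And>t. rg t \<ge> 0"
    and y: "y \<in> TVset rf rg"
  obtains \<phi> where "Cb_inf \<phi>" "\<And>x. \<bar>\<phi> x\<bar> \<le> 1" "y = (\<integral>t. (rf t - rg t) * \<phi> t \<partial>lborel)"
proof -
  obtain \<phi> where phi: "Cb_inf \<phi>" "\<And>x. \<bar>\<phi> x\<bar> \<le> 1"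
    and y: "y = (\<integral>x. \<phi> x \<partial>density lborel (\<lambda>t. ennreal (rf t))) - (\<integral>x. \<phi> x \<partial>density lborel (\<lambda>t. ennreal (rg t)))"
    using y unfolding TVset_def by blast
  have pb: "\<phi> \<in> borel_measurable borel" by (rule Cb_inf_borel[OF phi(1)])
  have "(\<integral>t. (rf t - rg t) * \<phi> t \<partial>lborel) = (\<integral>t. rf t * \<phi> t \<partial>lborel) - (\<integral>t. rg t * \<phi> t \<partial>lborel)"
    unfolding left_diff_distrib
    by (rule Bochner_Integration.integral_diff) (use integrable_rho_bounded[OF f(1) pb phi(2)] integrable_rho_bounded[OF g(1) pb phi(2)] in auto)
  also have "\<dots> = y"
    using density_integral[OF f pb] density_integral[OF g pb] y by simp
  finally show ?thesis using that phi by metis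
qed

lemma T_le_2:
  assumes f: "integrable lborel rf" "\<And>t. rf t \<ge> 0" "(\<integral>t. rf t \<partial>lborel) = 1"
    and g: "integrable lborel rg" "\<And>t. rg t \<ge> 0" "(\<integral>t. rg t \<partial>lborel) = 1"
    and phi: "Cb_inf \<phi>" "\<And>x. \<bar>\<phi> x\<bar> \<le> 1"
  shows "(\<integral>t. (rf t - rg t) * \<phi> t \<partial>lborel) \<le> 2"
proof -
  have "(\<integral>t. (rf t - rg t) * \<phi> t \<partial>lborel) \<in> TVset rf rg" by (rule TV_elem[OF f(1,2) g(1,2) phi])
  have pb: "\<phi> \<in> borel_measurable borel" by (rule Cb_inf_borel[OF phi(1)])
  have a: "\<bar>(rf t - rg t) * \<phi> t\<bar> \<le> rf t + rg t" for t
  proof -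
    have "\<bar>(rf t - rg t) * \<phi> t\<bar> \<le> \<bar>rf t - rg t\<bar>" using phi(2)[of t] by (simp add: abs_mult mult_left_le)
    then show ?thesis using f(2)[of t] g(2)[of t] by linarith
  qed
  have "(\<integral>t. (rf t - rg t) * \<phi> t \<partial>lborel) \<le> (\<integral>t. rf t + rg t \<partial>lborel)"
    by (rule integral_mono) (use integrable_rho_bounded[OF _ pb phi(2), of "\<lambda>t. rf t - rg t"] f g a in \<open>auto simp: abs_le_iff\<close>)
  also have "\<dots> = 2" using f g by simp
  finally show ?thesis .
qed

lemma second_ineq_abstract:
  assumes f: "integrable lborel rf" "\<And>t. rf t \<ge> 0" "(\<integral>t. rf t \<partial>lborel) = 1"
    and g: "integrable lborel rg" "\<And>t. rg t \<ge> 0" "(\<integral>t. rg t \<partial>lborel) = 1"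
    and SBf: "SBd rf Kf d" and SBg: "SBd rg Kg d" and Kf: "Kf \<ge> 0" and Kg: "Kg \<ge> 0" and d: "d \<ge> 1"
    and Cd: "2 + (Kf + Kg) * 2 powr (1 - 2/real d) \<le> Cd"
  shows "Sup (TVset rf rg) \<le> Cd * Sup (FMset rf rg) powr (1 / (1 + real d))"
proof (rule cSup_least)
  show "TVset rf rg \<noteq> {}" by (rule TVset_bdd(2)[OF f(1,2) g(1,2)])
  fix y assume "y \<in> TVset rf rg"
  then obtain \<phi> where phi: "Cb_inf \<phi>" "\<And>x. \<bar>\<phi> x\<bar> \<le> 1" and y: "y = (\<integral>t. (rf t - rg t) * \<phi> t \<partial>lborel)"
    using TVset_rep[OF f(1,2) g(1,2)] by blast
  let ?FM = "Sup (FMset rf rg)"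
  let ?Kt = "Kf + Kg"
  let ?c = "2 powr (1 - 2/real d)"
  have FM0: "?FM \<ge> 0" using cSup_upper[OF FMset_bdd(2)[OF f(1,2) g(1,2)] FMset_bdd(1)[OF f(1,2) g(1,2)]] .
  have Cd2: "Cd \<ge> 2" using Cd Kf Kg by (smt (verit) mult_nonneg_nonneg powr_ge_zero)
  have TB: "y \<le> (2 / \<epsilon>) * ?FM + ?Kt * (?c * \<epsilon> powr (1/real d))" if "\<epsilon> > 0" "\<epsilon> \<le> 2" for \<epsilon>
    unfolding y by (rule T_phi_bound[OF f(1,2) g(1,2) SBf SBg Kf Kg d phi that])
  consider "?FM \<ge> 1" | "0 < ?FM" "?FM < 1" | "?FM = 0" using FM0 by linarith
  then show "y \<le> Cd * ?FM powr (1 / (1 + real d))"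
  proof cases
    case 1
    have "y \<le> 2" unfolding y by (rule T_le_2[OF f g phi])
    also have "2 \<le> Cd * 1" using Cd2 by simp
    also have "Cd * 1 \<le> Cd * ?FM powr (1 / (1 + real d))"
      using 1 Cd2 by (intro mult_left_mono) (auto simp: ge_one_powr_ge_zero)
    finally show ?thesis .
  next
    case 2
    define \<epsilon> where "\<epsilon> = ?FM powr (real d / (real d + 1))"
    have e0: "\<epsilon> > 0" unfolding \<epsilon>_def using 2 by simp
    have e2: "\<epsilon> \<le> 2"
    proof -
      have "\<epsilon> \<le> 1 powr (real d / (real d + 1))" unfolding \<epsilon>_def using 2 by (intro powr_mono2) auto
      then show ?thesis by simp
    qed
    have q1: "?FM / \<epsilon> = ?FM powr (1 / (1 + real d))"
    proof -
      have "?FM / \<epsilon> = ?FM powr (1 - real d / (real d + 1))" unfolding \<epsilon>_def using 2 by (simp add: powr_diff)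
      also have "1 - real d / (real d + 1) = 1 / (1 + real d)" by (simp add: field_simps)
      finally show ?thesis .
    qed
    have q2: "\<epsilon> powr (1/real d) = ?FM powr (1 / (1 + real d))"
      unfolding \<epsilon>_def using d 2 by (simp add: powr_powr field_simps)
    have "y \<le> (2 / \<epsilon>) * ?FM + ?Kt * (?c * \<epsilon> powr (1/real d))" by (rule TB[OF e0 e2])
    also have "\<dots> = (2 + ?Kt * ?c) * ?FM powr (1 / (1 + real d))"
      using q1 q2 by (simp add: algebra_simps)
    also have "\<dots> \<le> Cd * ?FM powr (1 / (1 + real d))"
      using Cd by (intro mult_right_mono) auto
    finally show ?thesis .
  next
    case 3
    have lim: "(\<lambda>n. ?Kt * (?c * (1 / (real n + 1)) powr (1/real d))) \<longlonglongrightarrow> ?Kt * (?c * 0 powr (1/real d))"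
      using d by (intro tendsto_intros inv_Suc_lim) auto
    have "y \<le> ?Kt * (?c * 0 powr (1/real d))"
    proof (rule LIMSEQ_le_const[OF lim], intro exI allI impI)
      fix n :: nat
      have "1 / (real n + 1) \<le> 2" by (simp add: divide_le_eq)
      then have "y \<le> (2 / (1 / (real n + 1))) * ?FM + ?Kt * (?c * (1 / (real n + 1)) powr (1/real d))"
        by (intro TB) auto
      then show "y \<le> ?Kt * (?c * (1 / (real n + 1)) powr (1/real d))" using 3 by simp
    qed
    then show ?thesis using 3 by simp
  qed
qed

lemma four_powr_ge: "a \<ge> 0 \<Longrightarrow> 1 + a \<le> (4::real) powr a"
proof -
  assume a: "a \<ge> 0"
  have "ln (exp 1) \<le> ln (3::real)" using exp_le by (subst ln_le_cancel_iff) auto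
  also have "ln (3::real) < ln 4" by simp
  finally have l4: "1 < ln (4::real)" by simp
  have "1 + a \<le> 1 + a * ln 4" using a l4 by (simp add: mult_le_cancel_left1)
  also have "\<dots> \<le> exp (a * ln 4)" by (rule exp_ge_add_one_self)
  also have "exp (a * ln 4) = (4::real) powr a" by (simp add: powr_def)
  finally show ?thesis .
qed

lemma Cd_cond:
  fixes C S :: real and d :: nat
  assumes d: "d \<ge> 1" and CS: "C * S \<ge> 0"
  shows "2 + C * S * 2 powr (1 - 2/real d) \<le> 2 + 2 * C * S * (2 * pi) powr (- 1 / 2) * (\<integral>t. exp (- t\<^sup>2 / 2) * \<bar>t\<bar> powr (1 / real d) \<partial>lborel)"
proof -
  define a where "a = 1 / real d"
  have a: "0 < a" "a \<le> 1" unfolding a_def using d by auto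
  let ?I = "\<integral>t. exp (- t\<^sup>2 / 2) * \<bar>t\<bar> powr a \<partial>lborel"
  let ?m = "\<integral>t. std_normal_density t * \<bar>t\<bar> powr a \<partial>lborel"
  have pw: "(2 * pi) powr (- 1 / 2) = 1 / sqrt (2 * pi)"
    by (simp add: powr_minus_divide powr_half_sqrt[symmetric] divide_minus_left powr_minus)
  have mI: "(2 * pi) powr (- 1 / 2) * ?I = ?m"
    unfolding pw std_normal_density_def by (simp add: mult.assoc)
  have sq: "2 / sqrt (2 * pi) \<le> 1"
  proof -
    have "2 \<le> sqrt (2 * pi)" by (rule real_le_rsqrt) (use pi_ge_two in simp)
    then show ?thesis by simp
  qed
  have "?m \<ge> 1 - (2 / sqrt (2 * pi)) * (1 - 1 / (1 + a))" by (rule gauss_lower(2)[OF a])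
  moreover have "(2 / sqrt (2 * pi)) * (1 - 1 / (1 + a)) \<le> 1 * (1 - 1 / (1 + a))"
    using a sq by (intro mult_right_mono) (auto simp: field_simps)
  ultimately have m1: "?m \<ge> 1 / (1 + a)" by simp
  have "2 powr (1 - 2/real d) = 2 / 4 powr a"
  proof -
    have "(2::real) powr (1 - 2/real d) = 2 powr 1 / 2 powr (2 * a)" unfolding a_def by (simp add: powr_diff)
    also have "(2::real) powr (2 * a) = 4 powr a"
    proof -
      have "(2::real) powr (2 * a) = (2 powr 2) powr a" by (simp only: powr_powr)
      then show ?thesis by simp
    qed
    finally show ?thesis by simp
  qed
  also have "\<dots> \<le> 2 / (1 + a)" using four_powr_ge[of a] a by (intro divide_left_mono) auto
  also have "\<dots> \<le> 2 * ?m" using m1 by simp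
  finally have key: "2 powr (1 - 2/real d) \<le> 2 * ((2 * pi) powr (- 1 / 2) * ?I)" using mI by simp
  have "C * S * 2 powr (1 - 2/real d) \<le> C * S * (2 * ((2 * pi) powr (- 1 / 2) * ?I))"
    by (rule mult_left_mono[OF key CS])
  then show ?thesis unfolding a_def by (simp add: mult_ac)
qed

lemma dens_facts:
  fixes M :: "'e measure" and f :: "'e \<Rightarrow> real"
  assumes P: "prob_space M" and fm: "f \<in> borel_measurable M" and rb: "\<rho> \<in> borel_measurable borel"
    and r0: "\<forall>t. 0 \<le> \<rho> t" and dens: "distr M lborel f = density lborel (\<lambda>t. ennreal (\<rho> t))"
  shows "integrable lborel \<rho>" "(\<integral>t. \<rho> t \<partial>lborel) = 1"
proof -
  interpret prob_space M by fact
  have fm': "f \<in> measurable M lborel" using fm by simp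
  have "emeasure (distr M lborel f) UNIV = emeasure M (f -` UNIV \<inter> space M)"
    by (rule emeasure_distr[OF fm']) simp
  also have "\<dots> = 1" by (simp add: emeasure_space_1)
  finally have e1: "emeasure (density lborel (\<lambda>t. ennreal (\<rho> t))) UNIV = 1" using dens by simp
  have "emeasure (density lborel (\<lambda>t. ennreal (\<rho> t))) UNIV = (\<integral>\<^sup>+t. ennreal (\<rho> t) \<partial>lborel)"
    by (subst emeasure_density) (use rb in auto)
  with e1 have nn: "(\<integral>\<^sup>+t. ennreal (\<rho> t) \<partial>lborel) = 1" by simp
  show int: "integrable lborel \<rho>"
    by (rule integrableI_nonneg) (use rb r0 nn in auto)
  have "ennreal (\<integral>t. \<rho> t \<partial>lborel) = 1"
    using nn_integral_eq_integral[OF int] r0 nn by simp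
  then show "(\<integral>t. \<rho> t \<partial>lborel) = 1" using r0
    by (metis ennreal_eq_1 integral_nonneg_AE AE_I2)
qed

lemma dens_comp:
  fixes M :: "'e measure" and f :: "'e \<Rightarrow> real"
  assumes fm: "f \<in> borel_measurable M" and rb: "\<rho> \<in> borel_measurable borel"
    and r0: "\<forall>t. 0 \<le> \<rho> t" and dens: "distr M lborel f = density lborel (\<lambda>t. ennreal (\<rho> t))"
    and g: "g \<in> borel_measurable borel"
  shows "(\<integral>x. g (f x) \<partial>M) = (\<integral>t. \<rho> t * g t \<partial>lborel)"
proof -
  have fm': "f \<in> measurable M lborel" using fm by simp
  have "(\<integral>x. g (f x) \<partial>M) = (\<integral>t. g t \<partial>distr M lborel f)"
    by (rule integral_distr[symmetric, OF fm']) (use g in simp)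
  also have "\<dots> = (\<integral>t. \<rho> t * g t \<partial>lborel)"
    unfolding dens using integral_density[of g lborel \<rho>] rb r0 g by simp
  finally show ?thesis .
qed

lemma Cb_inf_deriv_borel: "Cb_inf \<theta> \<Longrightarrow> deriv \<theta> \<in> borel_measurable borel"
proof -
  assume "Cb_inf \<theta>"
  then have "smk (Suc 0) \<theta>" unfolding Cb_inf_smk by blast
  then have "smk 0 (deriv \<theta>)" by (simp add: smk_Suc)
  then show ?thesis by (rule smk_borel)
qed

lemma SBd_from_C:
  fixes M :: "'e measure" and f :: "'e \<Rightarrow> real"
  assumes CB: "\<forall>\<phi>. Cb_inf \<phi> \<and> (\<forall>x. \<bar>\<phi> x\<bar> \<le> 1) \<longrightarrow>
           \<sigma> powr (1 / real d) * (\<integral>x. deriv \<phi> (f x) \<partial>M) \<le> C * supnorm (deriv \<phi>) powr (1 - 1 / real d)"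
    and s: "\<sigma> > 0"
    and fm: "f \<in> borel_measurable M" and rb: "\<rho> \<in> borel_measurable borel"
    and r0: "\<forall>t. 0 \<le> \<rho> t" and dens: "distr M lborel f = density lborel (\<lambda>t. ennreal (\<rho> t))"
  shows "SBd \<rho> (C * \<sigma> powr (- 1 / real d)) d"
  unfolding SBd_def
proof (intro allI impI)
  fix \<theta> assume th: "Cb_inf \<theta> \<and> (\<forall>x. \<bar>\<theta> x\<bar> \<le> 1)"
  have eq: "(\<integral>x. deriv \<theta> (f x) \<partial>M) = (\<integral>t. \<rho> t * deriv \<theta> t \<partial>lborel)"
    by (rule dens_comp[OF fm rb r0 dens Cb_inf_deriv_borel]) (use th in auto)
  have "\<sigma> powr (1 / real d) * (\<integral>t. \<rho> t * deriv \<theta> t \<partial>lborel) \<le> C * supnorm (deriv \<theta>) powr (1 - 1 / real d)"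
    using CB th eq by metis
  then have "(\<integral>t. \<rho> t * deriv \<theta> t \<partial>lborel) \<le> C * supnorm (deriv \<theta>) powr (1 - 1 / real d) / \<sigma> powr (1 / real d)"
    using s by (simp add: field_simps mult.commute)
  also have "\<dots> = C * \<sigma> powr (- 1 / real d) * supnorm (deriv \<theta>) powr (1 - 1 / real d)"
    using s by (simp add: powr_minus_divide divide_minus_left powr_minus field_simps)
  finally show "(\<integral>t. \<rho> t * deriv \<theta> t \<partial>lborel) \<le> C * \<sigma> powr (- 1 / real d) * supnorm (deriv \<theta>) powr (1 - 1 / real d)" .
qed

lemma sigma_pos:
  fixes M :: "'e measure" and f :: "'e \<Rightarrow> real"
  assumes P: "prob_space M" and fm: "f \<in> borel_measurable M" and f2: "integrable M (\<lambda>x. (f x)\<^sup>2)"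
    and nc: "\<not> (\<exists>c. AE x in M. f x = c)"
  shows "sigma_f M f > 0"
proof -
  interpret prob_space M by fact
  let ?m = "\<integral>y. f y \<partial>M"
  have i: "integrable M (\<lambda>x. (f x - ?m)\<^sup>2)"
  proof (rule Bochner_Integration.integrable_bound[of M "\<lambda>x. 2 * (f x)\<^sup>2 + 2 * ?m\<^sup>2"])
    show "integrable M (\<lambda>x. 2 * (f x)\<^sup>2 + 2 * ?m\<^sup>2)" using f2 by simp
    show "(\<lambda>x. (f x - ?m)\<^sup>2) \<in> borel_measurable M" using fm by simp
    show "AE x in M. norm ((f x - ?m)\<^sup>2) \<le> norm (2 * (f x)\<^sup>2 + 2 * ?m\<^sup>2)"
    proof (rule AE_I2)
      fix x
      have "(f x - ?m)\<^sup>2 \<le> 2 * (f x)\<^sup>2 + 2 * ?m\<^sup>2"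
        using sum_squares_ge_zero[of "f x + ?m" 0] by (simp add: power2_eq_square algebra_simps)
      then show "norm ((f x - ?m)\<^sup>2) \<le> norm (2 * (f x)\<^sup>2 + 2 * ?m\<^sup>2)" by simp
    qed
  qed
  have nn: "(\<integral>x. (f x - ?m)\<^sup>2 \<partial>M) \<ge> 0" by simp
  have "(\<integral>x. (f x - ?m)\<^sup>2 \<partial>M) \<noteq> 0"
  proof
    assume "(\<integral>x. (f x - ?m)\<^sup>2 \<partial>M) = 0"
    then have "AE x in M. (f x - ?m)\<^sup>2 = 0" using integral_nonneg_eq_0_iff_AE[OF i] by simp
    then have "AE x in M. f x = ?m" by (rule AE_mp) auto
    then show False using nc by blast
  qed
  with nn have "(\<integral>x. (f x - ?m)\<^sup>2 \<partial>M) > 0" by linarith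
  then show ?thesis unfolding sigma_f_def by simp
qed

lemma supnorm_ge_1:
  assumes b: "bounded (range g)" and g0: "\<bar>g 0\<bar> \<ge> 1"
  shows "supnorm g \<ge> 1"
proof -
  obtain B where B: "\<And>x. \<bar>g x\<bar> \<le> B" using b unfolding bounded_range_iff by blast
  have "\<bar>g 0\<bar> \<le> supnorm g"
    unfolding supnorm_def by (rule cSUP_upper) (use B in \<open>auto intro!: bdd_aboveI2\<close>)
  then show ?thesis using g0 by linarith
qed

lemma SBd_K_nonneg:
  assumes SB: "SBd \<rho> K d"
  shows "K \<ge> 0"
proof -
  have Cs: "Cb_inf (sin :: real \<Rightarrow> real)" unfolding Cb_inf_smk using smk_sin_cos by blast
  have Cms: "Cb_inf (\<lambda>x::real. -1 * sin x)" by (rule Cb_inf_cmult[OF Cs])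
  have ds: "deriv (sin :: real \<Rightarrow> real) = cos" by (rule deriv_eqI) (rule DERIV_sin)
  have dms: "deriv (\<lambda>x::real. -1 * sin x) = (\<lambda>x::real. -1 * cos x)" by (rule deriv_eqI) (rule DERIV_cmult[OF DERIV_sin])
  have bc: "bounded (range (cos :: real \<Rightarrow> real))" unfolding bounded_range_iff by (meson abs_cos_le_one)
  have bmc: "bounded (range (\<lambda>x::real. -1 * cos x))" unfolding bounded_range_iff by (simp, meson abs_cos_le_one)
  define P1 where "P1 = supnorm cos powr (1 - 1 / real d)"
  define P2 where "P2 = supnorm (\<lambda>x::real. -1 * cos x) powr (1 - 1 / real d)"
  have P1: "P1 > 0" unfolding P1_def using supnorm_ge_1[OF bc] by simp
  have P2: "P2 > 0" unfolding P2_def using supnorm_ge_1[OF bmc] by simp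
  have "(\<integral>t. \<rho> t * deriv sin t \<partial>lborel) \<le> K * supnorm (deriv sin) powr (1 - 1 / real d)"
    using SB Cs abs_sin_le_one unfolding SBd_def by blast
  then have a: "(\<integral>t. \<rho> t * cos t \<partial>lborel) \<le> K * P1" unfolding P1_def ds .
  have "\<forall>x. \<bar>-1 * sin x\<bar> \<le> (1::real)" by (simp add: abs_sin_le_one)
  then have "(\<integral>t. \<rho> t * deriv (\<lambda>x::real. -1 * sin x) t \<partial>lborel) \<le> K * supnorm (deriv (\<lambda>x::real. -1 * sin x)) powr (1 - 1 / real d)"
    using SB Cms unfolding SBd_def by blast
  then have b: "(\<integral>t. \<rho> t * (-1 * cos t) \<partial>lborel) \<le> K * P2" unfolding P2_def dms .
  have "(\<integral>t. \<rho> t * (-1 * cos t) \<partial>lborel) = - (\<integral>t. \<rho> t * cos t \<partial>lborel)" by simp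
  with a b have "0 \<le> K * (P1 + P2)" by (simp add: algebra_simps)
  then show ?thesis using P1 P2 by (simp add: zero_le_mult_iff)
qed

theorem corollary5p4:
  fixes d :: nat and C p :: real
    and M :: "'e::{real_vector,t2_space} measure"
    and f g :: "'e \<Rightarrow> real" and \<rho>f \<rho>g :: "real \<Rightarrow> real"
  assumes d_pos: "d \<ge> 1"
    and E_lc: "lctvs TYPE('e)"
    and C_bound: "\<forall>N::'e measure. radon N \<and> log_concave N \<longrightarrow>
        (\<forall>h\<in>Pd N d. \<forall>\<phi>. Cb_inf \<phi> \<and> (\<forall>x. \<bar>\<phi> x\<bar> \<le> 1) \<longrightarrow>
           sigma_f N h powr (1 / real d) * (\<integral>x. deriv \<phi> (h x) \<partial>N)
             \<le> C * supnorm (deriv \<phi>) powr (1 - 1 / real d))"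
    and M_radon: "radon M" and M_lc: "log_concave M"
    and f_P: "f \<in> Pd M d" and g_P: "g \<in> Pd M d"
    and f_nc: "\<not> (\<exists>c. AE x in M. f x = c)"
    and g_nc: "\<not> (\<exists>c. AE x in M. g x = c)"
    and \<rho>f_meas: "\<rho>f \<in> borel_measurable borel" and \<rho>f_nn: "\<forall>t. 0 \<le> \<rho>f t"
    and \<rho>f_dens: "distr M lborel f = density lborel (\<lambda>t. ennreal (\<rho>f t))"
    and \<rho>g_meas: "\<rho>g \<in> borel_measurable borel" and \<rho>g_nn: "\<forall>t. 0 \<le> \<rho>g t"
    and \<rho>g_dens: "distr M lborel g = density lborel (\<lambda>t. ennreal (\<rho>g t))"
    and p_gt: "1 < p"
    and p_lt: "d = 1 \<or> p < real d / (real d - 1)"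
  shows
    "let sf = sigma_f M f; sg = sigma_f M g;
         S = sf powr (- 1 / real d) + sg powr (- 1 / real d);
         e = real d * (1 - 1 / p);
         C1 = (p / (p - 1) + (if d = 1 then 0 else p / (real d / (real d - 1) - p))) powr (1 / p)
                * C powr e;
         Cd = 2 + 2 * C * S * (2 * pi) powr (- 1 / 2)
                * (\<integral>t. exp (- t\<^sup>2 / 2) * \<bar>t\<bar> powr (1 / real d) \<partial>lborel);
         \<nu>f = distr M lborel f; \<nu>g = distr M lborel g;
         Lp = (\<integral>t. \<bar>\<rho>f t - \<rho>g t\<bar> powr p \<partial>lborel) powr (1 / p)
     in integrable lborel (\<lambda>t. \<bar>\<rho>f t - \<rho>g t\<bar> powr p) \<and>
        Lp \<le> C1 * S powr e * TV_dist \<nu>f \<nu>g powr (1 - e) \<and>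
        C1 * S powr e * TV_dist \<nu>f \<nu>g powr (1 - e)
          \<le> C1 * S powr e * Cd powr (1 - e) * FM_dist \<nu>f \<nu>g powr ((1 / (1 + real d)) * (1 - e))"
proof -
  have P: "prob_space M" using M_lc unfolding log_concave_def by blast
  have fm: "f \<in> borel_measurable M" and f2: "integrable M (\<lambda>x. (f x)\<^sup>2)" using f_P unfolding Pd_def by auto
  have gm: "g \<in> borel_measurable M" and g2: "integrable M (\<lambda>x. (g x)\<^sup>2)" using g_P unfolding Pd_def by auto
  have sf: "sigma_f M f > 0" by (rule sigma_pos[OF P fm f2 f_nc])
  have sg: "sigma_f M g > 0" by (rule sigma_pos[OF P gm g2 g_nc])
  have CBf: "\<forall>\<phi>. Cb_inf \<phi> \<and> (\<forall>x. \<bar>\<phi> x\<bar> \<le> 1) \<longrightarrow>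
           sigma_f M f powr (1 / real d) * (\<integral>x. deriv \<phi> (f x) \<partial>M) \<le> C * supnorm (deriv \<phi>) powr (1 - 1 / real d)"
    using C_bound M_radon M_lc f_P by blast
  have CBg: "\<forall>\<phi>. Cb_inf \<phi> \<and> (\<forall>x. \<bar>\<phi> x\<bar> \<le> 1) \<longrightarrow>
           sigma_f M g powr (1 / real d) * (\<integral>x. deriv \<phi> (g x) \<partial>M) \<le> C * supnorm (deriv \<phi>) powr (1 - 1 / real d)"
    using C_bound M_radon M_lc g_P by blast
  define Kf where "Kf = C * sigma_f M f powr (- 1 / real d)"
  define Kg where "Kg = C * sigma_f M g powr (- 1 / real d)"
  have SBf: "SBd \<rho>f Kf d" unfolding Kf_def by (rule SBd_from_C[OF CBf sf fm \<rho>f_meas \<rho>f_nn \<rho>f_dens])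
  have SBg: "SBd \<rho>g Kg d" unfolding Kg_def by (rule SBd_from_C[OF CBg sg gm \<rho>g_meas \<rho>g_nn \<rho>g_dens])
  have Kf0: "Kf \<ge> 0" by (rule SBd_K_nonneg[OF SBf])
  have Kg0: "Kg \<ge> 0" by (rule SBd_K_nonneg[OF SBg])
  have C0: "C \<ge> 0"
  proof -
    have "sigma_f M f powr (- 1 / real d) > 0" using sf by simp
    then show ?thesis using Kf0 unfolding Kf_def by (simp add: zero_le_mult_iff)
  qed
  have intf: "integrable lborel \<rho>f" and int1f: "(\<integral>t. \<rho>f t \<partial>lborel) = 1"
    using dens_facts[OF P fm \<rho>f_meas \<rho>f_nn \<rho>f_dens] by auto
  have intg: "integrable lborel \<rho>g" and int1g: "(\<integral>t. \<rho>g t \<partial>lborel) = 1"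
    using dens_facts[OF P gm \<rho>g_meas \<rho>g_nn \<rho>g_dens] by auto
  have fnn: "\<And>t. \<rho>f t \<ge> 0" and gnn: "\<And>t. \<rho>g t \<ge> 0" using \<rho>f_nn \<rho>g_nn by auto
  define S where "S = sigma_f M f powr (- 1 / real d) + sigma_f M g powr (- 1 / real d)"
  define e where "e = real d * (1 - 1 / p)"
  define X where "X = p / (p - 1) + (if d = 1 then 0 else p / (real d / (real d - 1) - p))"
  define C1 where "C1 = X powr (1 / p) * C powr e"
  define Cd where "Cd = 2 + 2 * C * S * (2 * pi) powr (- 1 / 2)
                * (\<integral>t. exp (- t\<^sup>2 / 2) * \<bar>t\<bar> powr (1 / real d) \<partial>lborel)"
  define TV where "TV = TV_dist (distr M lborel f) (distr M lborel g)"
  define FM where "FM = FM_dist (distr M lborel f) (distr M lborel g)"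
  define I where "I = (\<integral>t. \<bar>\<rho>f t - \<rho>g t\<bar> powr p \<partial>lborel)"
  define T where "T = (\<integral>t. \<bar>\<rho>f t - \<rho>g t\<bar> \<partial>lborel)"
  define \<beta> where "\<beta> = 1 - (real d - 1) * (p - 1)"
  have S0: "S \<ge> 0" unfolding S_def by simp
  have KS: "Kf + Kg = C * S" unfolding Kf_def Kg_def S_def by (simp add: algebra_simps)
  have CS0: "C * S \<ge> 0" using C0 S0 by simp
  have TVe: "TV = Sup (TVset \<rho>f \<rho>g)" unfolding TV_def \<rho>f_dens \<rho>g_dens by (rule TV_dist_eq)
  have FMe: "FM = Sup (FMset \<rho>f \<rho>g)" unfolding FM_def \<rho>f_dens \<rho>g_dens by (rule FM_dist_eq)
  have X0: "X \<ge> 0"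
  proof (cases "d = 1")
    case False
    then have "p < real d / (real d - 1)" using p_lt by simp
    then show ?thesis using p_gt False unfolding X_def by simp
  qed (use p_gt in \<open>simp add: X_def\<close>)
  have beta0: "\<beta> \<ge> 0"
  proof (cases "d = 1")
    case True then show ?thesis unfolding \<beta>_def by simp
  next
    case False
    then have d1: "real d > 1" using d_pos by simp
    have "p < real d / (real d - 1)" using p_lt False by simp
    then have "p * (real d - 1) < real d" using d1 by (simp add: field_simps)
    then show ?thesis unfolding \<beta>_def by (simp add: algebra_simps)
  qed
  have p0: "p > 0" using p_gt by simp
  have e_eq: "e = real d * (p - 1) / p" unfolding e_def using p0 by (simp add: field_simps)
  have be: "\<beta> / p = 1 - e" unfolding \<beta>_def e_def using p0 by (simp add: field_simps)
  have e1: "1 - e \<ge> 0" using be beta0 p0 by (metis divide_nonneg_pos)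
  note FI = first_ineq_abstract[OF intf fnn intg gnn SBf SBg Kf0 Kg0 d_pos p_gt p_lt]
  have intp: "integrable lborel (\<lambda>t. \<bar>\<rho>f t - \<rho>g t\<bar> powr p)" by (rule FI(1))
  have B1: "I \<le> X * (C * S) powr (real d * (p - 1)) * T powr \<beta>"
    using FI(2) unfolding I_def X_def T_def \<beta>_def KS .
  have T0: "T \<ge> 0" unfolding T_def by simp
  have TTV: "T \<le> TV" unfolding T_def TVe by (rule TV_lower[OF intf fnn intg gnn])
  have I0: "I \<ge> 0" unfolding I_def by simp
  have r2: "I powr (1 / p) \<le> C1 * S powr e * TV powr (1 - e)"
  proof -
    have le: "I \<le> X * (C * S) powr (real d * (p - 1)) * TV powr \<beta>"
      using B1 powr_mono2[OF beta0 T0 TTV] X0 by (meson mult_left_mono order_trans powr_ge_zero mult_nonneg_nonneg)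
    have "I powr (1 / p) \<le> (X * (C * S) powr (real d * (p - 1)) * TV powr \<beta>) powr (1 / p)"
      by (rule powr_mono2[OF _ I0 le]) (use p0 in simp)
    also have "\<dots> = X powr (1 / p) * ((C * S) powr (real d * (p - 1))) powr (1 / p) * (TV powr \<beta>) powr (1 / p)"
      using X0 by (simp add: powr_mult)
    also have "((C * S) powr (real d * (p - 1))) powr (1 / p) = (C * S) powr e"
      unfolding powr_powr e_eq by simp
    also have "(TV powr \<beta>) powr (1 / p) = TV powr (1 - e)"
      unfolding powr_powr using be by simp
    also have "(C * S) powr e = C powr e * S powr e" using C0 S0 by (simp add: powr_mult)
    finally show ?thesis unfolding C1_def by (simp add: mult_ac)
  qed
  have Cdc: "2 + (Kf + Kg) * 2 powr (1 - 2 / real d) \<le> Cd"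
    unfolding KS Cd_def by (rule Cd_cond[OF d_pos CS0])
  have SI: "TV \<le> Cd * FM powr (1 / (1 + real d))"
    unfolding TVe FMe by (rule second_ineq_abstract[OF intf fnn int1f intg gnn int1g SBf SBg Kf0 Kg0 d_pos Cdc])
  have Cd0: "Cd \<ge> 0" using Cdc Kf0 Kg0 by (smt (verit) mult_nonneg_nonneg powr_ge_zero)
  have TV0: "TV \<ge> 0" using T0 TTV by linarith
  have r3: "C1 * S powr e * TV powr (1 - e) \<le> C1 * S powr e * Cd powr (1 - e) * FM powr ((1 / (1 + real d)) * (1 - e))"
  proof -
    have "TV powr (1 - e) \<le> (Cd * FM powr (1 / (1 + real d))) powr (1 - e)"
      by (rule powr_mono2[OF e1 TV0 SI])
    also have "\<dots> = Cd powr (1 - e) * FM powr ((1 / (1 + real d)) * (1 - e))"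
      using Cd0 by (simp add: powr_mult powr_powr)
    finally have "TV powr (1 - e) \<le> Cd powr (1 - e) * FM powr ((1 / (1 + real d)) * (1 - e))" .
    moreover have "C1 * S powr e \<ge> 0" unfolding C1_def by simp
    ultimately have "(C1 * S powr e) * TV powr (1 - e) \<le> (C1 * S powr e) * (Cd powr (1 - e) * FM powr ((1 / (1 + real d)) * (1 - e)))"
      by (rule mult_left_mono)
    then show ?thesis by (simp only: mult.assoc)
  qed
  show ?thesis
    using intp r2 r3 unfolding Let_def S_def e_def C1_def X_def Cd_def TV_def FM_def I_def by blast
qed

end
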